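(* Suppose (i) the prior satisfies $\pi_0(\theta^* )>0$, and (ii) (combinational identifiability) along the closed-loop trajectory there exists a collection of subsequences $\{(x^m_k,u^m_k)\}_{k\ge1}$, $m\in\mathcal{M}\subseteq\mathbb{N}$, of $(x_k,u_k)$, each converging to a limit context $\eta_m=(x^m_\infty,u^m_\infty)$, such that the combination of the blind regions of the models $\mathcal{P}(\eta_m)$ is empty, i.e. $\mathcal{BR}(\eta_1)\oplus\mathcal{BR}(\eta_2)\oplus\cdots=\emptyset$. Then the posterior $\pi_k$ converges to the point mass $\delta_{\theta^*}$, i.e. $\lim_{k\to\infty}\pi_k(\theta)=\mathbf{1}\{\theta=\theta^*\}$ for every $\theta\in\Theta$, with probability 1.
   Context: System: $x_{k+1}=f(x_k,u_k,w_k,\theta)$ with $x_k\in\mathcal{X}$, $u_k\in\mathcal{U}$ (nonempty Borel spaces), $w_k$ i.i.d. disturbances with a probability density, and $f$ Borel measurable. The parameter set $\Theta=\{\theta_1,\theta_2,\dots\}$ is countably infinite; the data are generated by the true parameter $\theta^*\in\Theta$, and each $u_k$ is a measurable function of the past observations $(x_0,\dots,x_k,u_0,\dots,u_{k-1})$. The transition kernel $q(x';\theta,x,u)$ is the density of $x_{k+1}$ given $x_k=x,u_k=u$ and parameter $\theta$; it is assumed continuously differentiable, strictly positive, with bounded first derivative in $x'$. Given a prior $\pi_0$ on $\Theta$, the posterior is updated by $\pi_k(\theta)=\dfrac{q(x_k;\theta,x_{k-1},u_{k-1})\,\pi_{k-1}(\theta)}{\sum_{\theta'\in\Theta}q(x_k;\theta',x_{k-1},u_{k-1})\pi_{k-1}(\theta')}$.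 A context is $\eta=(x,u)$ and $\mathcal{P}(\eta)=\{q(\cdot;\theta,x,u):\theta\in\Theta\}$. Elements of $\mathcal{D}\subseteq\Theta$ are \emph{observationally non-distinguishable} from $\{\mathcal{P}(\eta_m),m\in\mathcal{M}\}$ if there exist scalars $c_i\neq0$ (one per $\theta_i\in\mathcal{D}$) with $\sum_{\theta_i\in\mathcal{D}}c_i q(\cdot;\theta_i,\eta_m)=0$ for all $m\in\mathcal{M}$; otherwise \emph{observationally distinguishable}. A \emph{blind zone} of $\{\mathcal{P}(\eta_m),m\in\mathcal{M}\}$ is a set $\mathcal{BZ}\subseteq\Theta$ with at least two elements whose elements are observationally non-distinguishable from it and such that for every $\theta\notin\mathcal{BZ}$ the elements of $\mathcal{BZ}\cup\{\theta\}$ are observationally distinguishable from it. The \emph{blind region} of a collection of models is the union of all its blind zones. For a collection of contexts $\{\eta_m,m\in\mathcal{M}\}$, $\mathcal{BR}(\eta_1)\oplus\mathcal{BR}(\eta_2)\oplus\cdots$ denotes the blind region of the whole collection $\{\mathcal{P}(\eta_m),m\in\mathcal{M}\}$. *)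

theory Defs
  imports "HOL-Probability.Probability"
begin

text \<open>A transition kernel is represented as q th x u x' = q(x'; th, x, u).
  A context is a pair (x,u). A collection of models {P(eta_m), m in M} is
  represented by the set of its contexts C.\<close>

definition obs_nondist ::
  "('th \<Rightarrow> 'x \<Rightarrow> 'u \<Rightarrow> 'x \<Rightarrow> real) \<Rightarrow> ('x \<times> 'u) set \<Rightarrow> 'th set \<Rightarrow> bool" where
  "obs_nondist q C D \<longleftrightarrow>
     (\<exists>c :: 'th \<Rightarrow> real. (\<forall>th\<in>D. c th \<noteq> 0) \<and>
        (\<forall>eta\<in>C. \<forall>x'. ((\<lambda>th. c th * q th (fst eta) (snd eta) x') has_sum 0) D))"

definition blind_zone ::
  "('th \<Rightarrow> 'x \<Rightarrow> 'u \<Rightarrow> 'x \<Rightarrow> real) \<Rightarrow> ('x \<times> 'u) set \<Rightarrow> 'th set \<Rightarrow> bool" where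
  "blind_zone q C B \<longleftrightarrow>
     (\<exists>a\<in>B. \<exists>b\<in>B. a \<noteq> b) \<and> obs_nondist q C B \<and>
     (\<forall>th. th \<notin> B \<longrightarrow> \<not> obs_nondist q C (insert th B))"

definition blind_region ::
  "('th \<Rightarrow> 'x \<Rightarrow> 'u \<Rightarrow> 'x \<Rightarrow> real) \<Rightarrow> ('x \<times> 'u) set \<Rightarrow> 'th set" where
  "blind_region q C = \<Union>{B. blind_zone q C B}"

fun posterior ::
  "('th \<Rightarrow> real) \<Rightarrow> ('th \<Rightarrow> 'x \<Rightarrow> 'u \<Rightarrow> 'x \<Rightarrow> real) \<Rightarrow> (nat \<Rightarrow> 'x) \<Rightarrow> (nat \<Rightarrow> 'u)
     \<Rightarrow> nat \<Rightarrow> 'th \<Rightarrow> real" where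
  "posterior pi0 q xs us 0 th = pi0 th"
| "posterior pi0 q xs us (Suc k) th =
     q th (xs k) (us k) (xs (Suc k)) * posterior pi0 q xs us k th /
     (\<Sum>\<^sub>\<infinity>th'. q th' (xs k) (us k) (xs (Suc k)) * posterior pi0 q xs us k th')"

end

theory Submission
  imports Defs
begin

lemma ville_max:
  fixes M :: "'a measure" and F :: "nat \<Rightarrow> 'a measure" and N :: "nat \<Rightarrow> 'a \<Rightarrow> ennreal"
  assumes sub: "\<And>k. subalgebra M (F k)"
   and mono: "\<And>k. sets (F k) \<subseteq> sets (F (Suc k))"
   and meas: "\<And>k. N k \<in> borel_measurable (F k)"
   and mart: "\<And>k A. A \<in> sets (F k) \<Longrightarrow>
      (\<integral>\<^sup>+\<omega>. N (Suc k) \<omega> * indicator A \<omega> \<partial>M) = (\<integral>\<^sup>+\<omega>. N k \<omega> * indicator A \<omega> \<partial>M)"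
  shows "c * emeasure M {\<omega>\<in>space M. \<exists>k. c \<le> N k \<omega>} \<le> (\<integral>\<^sup>+\<omega>. N 0 \<omega> \<partial>M)"
proof -
  have spF: "space (F k) = space M" for k using sub[of k] by (simp add: subalgebra_def)
  have setsF: "sets (F k) \<subseteq> sets M" for k using sub[of k] by (simp add: subalgebra_def)
  have monole: "j \<le> n \<Longrightarrow> sets (F j) \<subseteq> sets (F n)" for j n
    by (induction n rule: dec_induct) (use mono in blast)+
  have measle: "i \<le> j \<Longrightarrow> N i \<in> borel_measurable (F j)" for i j
    by (rule borel_measurable_subalgebra[OF monole spF[of i, folded spF[of j]] meas], simp)
  have measM: "N i \<in> borel_measurable M" for i
    by (rule borel_measurable_subalgebra[OF setsF _ meas]) (simp add: spF)
  have mart': "j \<le> n \<Longrightarrow> A \<in> sets (F j) \<Longrightarrow>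
      (\<integral>\<^sup>+\<omega>. N n \<omega> * indicator A \<omega> \<partial>M) = (\<integral>\<^sup>+\<omega>. N j \<omega> * indicator A \<omega> \<partial>M)" for j n A
  proof (induction n rule: dec_induct)
    case (step n)
    then show ?case using mart[of A n] monole[of j n] by auto
  qed simp
  define B where "B j = {\<omega>\<in>space M. c \<le> N j \<omega> \<and> (\<forall>i<j. N i \<omega> < c)}" for j
  have BF: "B j \<in> sets (F j)" for j
  proof -
    have "B j = {\<omega>\<in>space (F j). c \<le> N j \<omega>} \<inter> (\<Inter>i\<in>{..<j}. {\<omega>\<in>space (F j). N i \<omega> < c})
          \<inter> space (F j)"
      unfolding B_def spF by auto
    also have "\<dots> \<in> sets (F j)"
    proof (cases "j = 0")
      case True then show ?thesis using meas[of j] by simp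
    next
      case False then show ?thesis
      using measle meas by (intro sets.Int sets.finite_INT) auto
    qed
    finally show ?thesis .
  qed
  have BM: "B j \<in> sets M" for j using BF setsF by blast
  have Bdisj: "i \<noteq> j \<Longrightarrow> B i \<inter> B j = {}" for i j
    unfolding B_def by (cases i j rule: linorder_cases) (auto simp: not_less[symmetric])
  have Bun: "{\<omega>\<in>space M. \<exists>k\<le>n. c \<le> N k \<omega>} = (\<Union>j\<le>n. B j)" for n
  proof safe
    fix \<omega> k assume w: "\<omega> \<in> space M" "k \<le> n" "c \<le> N k \<omega>"
    define j where "j = (LEAST j. c \<le> N j \<omega>)"
    have j1: "c \<le> N j \<omega>" unfolding j_def by (rule LeastI[of _ k], fact)
    have j2: "j \<le> k" unfolding j_def by (rule Least_le, fact)
    have "\<forall>i<j. N i \<omega> < c" using not_less_Least[of _ "\<lambda>j. c \<le> N j \<omega>"] unfolding j_def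
      by (auto simp: not_le)
    then show "\<omega> \<in> (\<Union>j\<le>n. B j)" using j1 j2 w unfolding B_def by (auto intro!: bexI[of _ j])
  qed (auto simp: B_def)
  have fin: "c * emeasure M {\<omega>\<in>space M. \<exists>k\<le>n. c \<le> N k \<omega>} \<le> (\<integral>\<^sup>+\<omega>. N 0 \<omega> \<partial>M)" for n
  proof -
    have "c * emeasure M {\<omega>\<in>space M. \<exists>k\<le>n. c \<le> N k \<omega>} = c * (\<Sum>j\<le>n. emeasure M (B j))"
      unfolding Bun using BM Bdisj
      by (subst sum_emeasure) (auto simp: disjoint_family_on_def)
    also have "\<dots> = (\<Sum>j\<le>n. c * emeasure M (B j))" by (simp add: sum_distrib_left)
    also have "\<dots> \<le> (\<Sum>j\<le>n. \<integral>\<^sup>+\<omega>. N j \<omega> * indicator (B j) \<omega> \<partial>M)"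
    proof (intro sum_mono)
      fix j
      have "c * emeasure M (B j) = (\<integral>\<^sup>+\<omega>. c * indicator (B j) \<omega> \<partial>M)"
        using BM by (simp add: nn_integral_cmult_indicator)
      also have "\<dots> \<le> (\<integral>\<^sup>+\<omega>. N j \<omega> * indicator (B j) \<omega> \<partial>M)"
        by (intro nn_integral_mono) (auto simp: B_def indicator_def)
      finally show "c * emeasure M (B j) \<le> \<dots>" .
    qed
    also have "\<dots> = (\<Sum>j\<le>n. \<integral>\<^sup>+\<omega>. N n \<omega> * indicator (B j) \<omega> \<partial>M)"
      using mart' BF by (intro sum.cong) auto
    also have "\<dots> = (\<integral>\<^sup>+\<omega>. (\<Sum>j\<le>n. N n \<omega> * indicator (B j) \<omega>) \<partial>M)"
      using measM BM by (subst nn_integral_sum) auto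
    also have "\<dots> \<le> (\<integral>\<^sup>+\<omega>. N n \<omega> \<partial>M)"
    proof (intro nn_integral_mono)
      fix \<omega>
      have "(\<Sum>j\<le>n. N n \<omega> * indicator (B j) \<omega>) = N n \<omega> * (\<Sum>j\<le>n. indicator (B j) \<omega>)"
        by (simp add: sum_distrib_left)
      also have "(\<Sum>j\<le>n. indicator (B j) \<omega> :: ennreal) = indicator (\<Union>j\<le>n. B j) \<omega>"
        using Bdisj by (intro indicator_UN_disjoint[symmetric]) (auto simp: disjoint_family_on_def)
      also have "N n \<omega> * \<dots> \<le> N n \<omega>" by (simp add: indicator_def)
      finally show "(\<Sum>j\<le>n. N n \<omega> * indicator (B j) \<omega>) \<le> N n \<omega>" .
    qed
    also have "\<dots> = (\<integral>\<^sup>+\<omega>. N n \<omega> * indicator (space M) \<omega> \<partial>M)"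
      by (intro nn_integral_cong) (simp add: indicator_def)
    also have "\<dots> = (\<integral>\<^sup>+\<omega>. N 0 \<omega> * indicator (space M) \<omega> \<partial>M)"
      using mart'[of 0 n "space M"] sets.top[of "F 0"] spF[of 0] by simp
    also have "\<dots> = (\<integral>\<^sup>+\<omega>. N 0 \<omega> \<partial>M)"
      by (intro nn_integral_cong) (simp add: indicator_def)
    finally show ?thesis .
  qed
  define C where "C n = {\<omega>\<in>space M. \<exists>k\<le>n. c \<le> N k \<omega>}" for n
  have CM: "C n \<in> sets M" for n
    unfolding C_def Bun using BM by auto
  have "incseq C" unfolding C_def by (intro monoI) (auto intro: order_trans)
  have "{\<omega>\<in>space M. \<exists>k. c \<le> N k \<omega>} = (\<Union>n. C n)" unfolding C_def by auto
  then have "emeasure M {\<omega>\<in>space M. \<exists>k. c \<le> N k \<omega>} = (SUP n. emeasure M (C n))"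
    using SUP_emeasure_incseq[of C M] CM \<open>incseq C\<close> by (simp add: image_subset_iff)
  then have "c * emeasure M {\<omega>\<in>space M. \<exists>k. c \<le> N k \<omega>} = (SUP n. c * emeasure M (C n))"
    by (simp add: SUP_mult_left_ennreal)
  also have "\<dots> \<le> (\<integral>\<^sup>+\<omega>. N 0 \<omega> \<partial>M)"
    using fin unfolding C_def by (intro SUP_least) auto
  finally show ?thesis .
qed

lemma ville_bounded:
  fixes M :: "'a measure" and F :: "nat \<Rightarrow> 'a measure" and N :: "nat \<Rightarrow> 'a \<Rightarrow> ennreal"
  assumes sub: "\<And>k. subalgebra M (F k)"
   and mono: "\<And>k. sets (F k) \<subseteq> sets (F (Suc k))"
   and meas: "\<And>k. N k \<in> borel_measurable (F k)"
   and mart: "\<And>k A. A \<in> sets (F k) \<Longrightarrow>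
      (\<integral>\<^sup>+\<omega>. N (Suc k) \<omega> * indicator A \<omega> \<partial>M) = (\<integral>\<^sup>+\<omega>. N k \<omega> * indicator A \<omega> \<partial>M)"
   and fin: "(\<integral>\<^sup>+\<omega>. N 0 \<omega> \<partial>M) < \<infinity>"
  shows "AE \<omega> in M. \<exists>K::real. \<forall>k. N k \<omega> \<le> ennreal K"
proof -
  have measM [measurable]: "N i \<in> borel_measurable M" for i
    using sub[of i] by (intro measurable_from_subalg[OF sub meas])
  define Bad where "Bad = {\<omega>\<in>space M. \<forall>K::nat. \<exists>k. of_nat K \<le> N k \<omega>}"
  have Bad_sets: "Bad \<in> sets M" unfolding Bad_def by measurable
  have bnd: "of_nat K * emeasure M Bad \<le> (\<integral>\<^sup>+\<omega>. N 0 \<omega> \<partial>M)" for K :: nat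
  proof -
    have "emeasure M Bad \<le> emeasure M {\<omega>\<in>space M. \<exists>k. of_nat K \<le> N k \<omega>}"
      by (intro emeasure_mono) (auto simp: Bad_def)
    then have "of_nat K * emeasure M Bad \<le> of_nat K * emeasure M {\<omega>\<in>space M. \<exists>k. of_nat K \<le> N k \<omega>}"
      by (intro mult_left_mono) auto
    also have "\<dots> \<le> (\<integral>\<^sup>+\<omega>. N 0 \<omega> \<partial>M)"
      by (rule ville_max[of M F N, OF sub mono meas mart])
    finally show ?thesis .
  qed
  obtain s where s: "(\<integral>\<^sup>+\<omega>. N 0 \<omega> \<partial>M) = ennreal s" "0 \<le> s"
    using fin by (cases "(\<integral>\<^sup>+\<omega>. N 0 \<omega> \<partial>M)") auto
  have "emeasure M Bad = 0"
  proof (cases "emeasure M Bad")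
    case (real r)
    show ?thesis
    proof (rule ccontr)
      assume "emeasure M Bad \<noteq> 0"
      then have r: "r > 0" using real by auto
      obtain n :: nat where n: "s < real n * r" using reals_Archimedean3[OF r] by blast
      have "ennreal (real n * r) \<le> ennreal s"
        using bnd[of n] s real by (simp add: ennreal_mult' ennreal_of_nat_eq_real_of_nat)
      then have "real n * r \<le> s" using s by (simp add: ennreal_le_iff)
      with n show False by simp
    qed
  next
    case top
    have "of_nat 1 * emeasure M Bad \<le> ennreal s" using bnd[of 1] s by simp
    then show ?thesis using top by (simp add: top_unique)
  qed
  then have "Bad \<in> null_sets M" using Bad_sets by auto
  then show ?thesis
  proof (rule AE_I')
    show "{\<omega> \<in> space M. \<not> (\<exists>K::real. \<forall>k. N k \<omega> \<le> ennreal K)} \<subseteq> Bad"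
    proof safe
      fix \<omega> assume w: "\<omega> \<in> space M" "\<not> (\<exists>K::real. \<forall>k. N k \<omega> \<le> ennreal K)"
      have "\<exists>k. of_nat K \<le> N k \<omega>" for K :: nat
      proof -
        from w(2) obtain k where "\<not> N k \<omega> \<le> ennreal (real K)" by blast
        then have "ennreal (real K) \<le> N k \<omega>" by (simp add: not_le less_imp_le)
        then show ?thesis by (auto simp: ennreal_of_nat_eq_real_of_nat)
      qed
      then show "\<omega> \<in> Bad" using w(1) unfolding Bad_def by blast
    qed
  qed
qed

locale bsys = prob_space M for M :: "'a measure" +
  fixes x :: "nat \<Rightarrow> 'a \<Rightarrow> 'x::euclidean_space"
    and u :: "nat \<Rightarrow> 'a \<Rightarrow> 'u::polish_space"
    and w :: "nat \<Rightarrow> 'a \<Rightarrow> 'w::euclidean_space"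
    and g :: "'w \<Rightarrow> ennreal"
    and f :: "'x \<Rightarrow> 'u \<Rightarrow> 'w \<Rightarrow> 'th \<Rightarrow> 'x"
    and q :: "'th \<Rightarrow> 'x \<Rightarrow> 'u \<Rightarrow> 'x \<Rightarrow> real"
    and phi :: "nat \<Rightarrow> (nat \<Rightarrow> 'x) \<times> (nat \<Rightarrow> 'u) \<Rightarrow> 'u"
    and th_star :: 'th
  assumes f_meas: "\<And>th. (\<lambda>(xx, uu, ww). f xx uu ww th)
                   \<in> borel_measurable (borel \<Otimes>\<^sub>M borel \<Otimes>\<^sub>M borel)"
    and x0_meas: "x 0 \<in> borel_measurable M"
    and w_dist: "\<And>k. distributed M lborel (w k) g"
    and w_indep: "prob_space.indep_vars M (\<lambda>_. borel) w UNIV"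
    and x0_w_indep: "prob_space.indep_set M
                         (sets (vimage_algebra (space M) (x 0) borel))
                         (sets (vimage_algebra (space M) (\<lambda>\<omega>. \<lambda>k. w k \<omega>) (PiM UNIV (\<lambda>_. borel))))"
    and dyn: "\<And>k \<omega>. x (Suc k) \<omega> = f (x k \<omega>) (u k \<omega>) (w k \<omega>) th_star"
    and phi_meas: "\<And>k. phi k \<in> borel_measurable
                     (PiM {..k} (\<lambda>_. borel) \<Otimes>\<^sub>M PiM {..<k} (\<lambda>_. borel))"
    and policy: "\<And>k \<omega>. u k \<omega> = phi k (restrict (\<lambda>i. x i \<omega>) {..k}, restrict (\<lambda>i. u i \<omega>) {..<k})"
    and q_density: "\<And>th xx uu. distr (density lborel g) lborel (\<lambda>ww. f xx uu ww th)
                                 = density lborel (\<lambda>x'. ennreal (q th xx uu x'))"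
    and q_pos: "\<And>th xx uu x'. q th xx uu x' > 0"
    and q_cont: "\<And>th. continuous_on UNIV (\<lambda>(x', xx, uu). q th xx uu x')"
begin

definition E :: "nat option \<Rightarrow> 'a set set" where
  "E i = (case i of None \<Rightarrow> {x 0 -` A \<inter> space M | A. A \<in> sets borel}
                  | Some j \<Rightarrow> {w j -` A \<inter> space M | A. A \<in> sets borel})"

definition Ik :: "nat \<Rightarrow> nat option set" where
  "Ik k = insert None (Some ` {..<k})"

definition F :: "nat \<Rightarrow> 'a measure" where
  "F k = sigma (space M) (\<Union>i\<in>Ik k. E i)"

lemma w_meas: "w k \<in> borel_measurable M"
  using w_dist[of k] by (auto dest: distributed_measurable)

lemma E_sets: "E i \<subseteq> sets M"
  using x0_meas w_meas by (auto simp: E_def split: option.splits)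

lemma E_Pow: "(\<Union>i\<in>Ik k. E i) \<subseteq> Pow (space M)"
  using E_sets sets.sets_into_space by blast

lemma sets_F: "sets (F k) = sigma_sets (space M) (\<Union>i\<in>Ik k. E i)"
  unfolding F_def using E_Pow by simp

lemma space_F: "space (F k) = space M"
  unfolding F_def using E_Pow by simp

lemma sub_F: "subalgebra M (F k)"
  unfolding subalgebra_def space_F sets_F
  using E_sets by (intro conjI refl sets.sigma_sets_subset) auto

lemma Ik_mono: "i \<le> k \<Longrightarrow> Ik i \<subseteq> Ik k"
  by (auto simp: Ik_def)

lemma F_mono: "i \<le> k \<Longrightarrow> sets (F i) \<subseteq> sets (F k)"
  unfolding sets_F
proof (intro sigma_sets_mono subsetI)
  fix a assume "i \<le> k" "a \<in> (\<Union>i\<in>Ik i. E i)"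
  with Ik_mono[OF this(1)] show "a \<in> sigma_sets (space M) (\<Union>i\<in>Ik k. E i)"
    by (blast intro: sigma_sets.Basic)
qed

lemma F_mono_Suc: "sets (F k) \<subseteq> sets (F (Suc k))"
  by (rule F_mono) simp

lemma F_meas_mono: "i \<le> k \<Longrightarrow> h \<in> borel_measurable (F i) \<Longrightarrow> h \<in> borel_measurable (F k)"
  using measurable_mono[OF order_refl refl F_mono space_F[of i, folded space_F[of k]]] by blast

lemma F_meas_M: "h \<in> borel_measurable (F i) \<Longrightarrow> h \<in> borel_measurable M"
  by (rule measurable_from_subalg[OF sub_F])

lemma gen_meas:
  assumes "\<And>A. A \<in> sets borel \<Longrightarrow> h -` A \<inter> space M \<in> (\<Union>i\<in>Ik k. E i)"
    and "h \<in> space M \<rightarrow> UNIV"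
  shows "h \<in> borel_measurable (F k)"
proof (rule measurableI)
  fix A :: "'b set" assume "A \<in> sets borel"
  then show "h -` A \<inter> space (F k) \<in> sets (F k)"
    unfolding sets_F space_F using assms by (auto intro: sigma_sets.Basic)
qed simp

lemma x0_F: "x 0 \<in> borel_measurable (F k)"
  by (rule gen_meas) (auto simp: Ik_def E_def)

lemma w_F: "i < k \<Longrightarrow> w i \<in> borel_measurable (F k)"
  by (rule gen_meas) (auto simp: Ik_def E_def)

end

context bsys begin

lemma u_from:
  assumes "\<forall>i\<le>k. x i \<in> borel_measurable (F k)" "\<forall>i<k. u i \<in> borel_measurable (F k)"
  shows "u k \<in> borel_measurable (F k)"
proof -
  have eq: "u k = (\<lambda>\<omega>. phi k (restrict (\<lambda>i. x i \<omega>) {..k}, restrict (\<lambda>i. u i \<omega>) {..<k}))"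
    by (intro ext) (rule policy)
  have "(\<lambda>\<omega>. (restrict (\<lambda>i. x i \<omega>) {..k}, restrict (\<lambda>i. u i \<omega>) {..<k}))
      \<in> measurable (F k) (PiM {..k} (\<lambda>_. borel) \<Otimes>\<^sub>M PiM {..<k} (\<lambda>_. borel))"
    using assms by (intro measurable_Pair measurable_restrict) (simp_all add: lessThan_iff atMost_iff)
  from measurable_compose[OF this phi_meas] show ?thesis unfolding eq .
qed

lemma xu_meas_all: "(\<forall>i\<le>k. x i \<in> borel_measurable (F k)) \<and> (\<forall>i\<le>k. u i \<in> borel_measurable (F k))"
proof (induction k)
  case 0
  have "x 0 \<in> borel_measurable (F 0)" by (rule x0_F)
  moreover have "u 0 \<in> borel_measurable (F 0)" using x0_F by (intro u_from) auto
  ultimately show ?case by auto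
next
  case (Suc k)
  have xs: "\<forall>i\<le>k. x i \<in> borel_measurable (F (Suc k))" and us: "\<forall>i\<le>k. u i \<in> borel_measurable (F (Suc k))"
    using Suc F_meas_mono[of k "Suc k"] by auto
  have "(\<lambda>\<omega>. (x k \<omega>, u k \<omega>, w k \<omega>)) \<in> measurable (F (Suc k)) (borel \<Otimes>\<^sub>M borel \<Otimes>\<^sub>M borel)"
  proof (intro measurable_Pair)
    show "x k \<in> borel_measurable (F (Suc k))" using xs by simp
    show "u k \<in> borel_measurable (F (Suc k))" using us by simp
    show "w k \<in> borel_measurable (F (Suc k))" using w_F[of k "Suc k"] by simp
  qed
  from measurable_compose[OF this f_meas[of th_star]]
  have "(\<lambda>\<omega>. f (x k \<omega>) (u k \<omega>) (w k \<omega>) th_star) \<in> borel_measurable (F (Suc k))"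
    by simp
  moreover have "x (Suc k) = (\<lambda>\<omega>. f (x k \<omega>) (u k \<omega>) (w k \<omega>) th_star)"
    using dyn by (intro ext) simp
  ultimately have "x (Suc k) \<in> borel_measurable (F (Suc k))" by simp
  with xs have xs': "\<forall>i\<le>Suc k. x i \<in> borel_measurable (F (Suc k))" by (auto simp: le_Suc_eq)
  have "u (Suc k) \<in> borel_measurable (F (Suc k))" using xs' us by (intro u_from) (auto simp: less_Suc_eq_le)
  with xs' us show ?case by (auto simp: le_Suc_eq)
qed

lemma x_F: "i \<le> k \<Longrightarrow> x i \<in> borel_measurable (F k)"
  using xu_meas_all by blast

lemma u_F: "i \<le> k \<Longrightarrow> u i \<in> borel_measurable (F k)"
  using xu_meas_all by blast

lemma x_M: "x i \<in> borel_measurable M"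
  using x_F[of i i] F_meas_M by blast

lemma u_M: "u i \<in> borel_measurable M"
  using u_F[of i i] F_meas_M by blast

end

context bsys begin

lemma Int_stable_E: "Int_stable (E i)"
proof (cases i)
  case None
  show ?thesis unfolding None Int_stable_def E_def option.case
  proof (clarsimp)
    fix A B :: "'x set" assume "A \<in> sets borel" "B \<in> sets borel"
    then show "\<exists>C. x 0 -` A \<inter> space M \<inter> (x 0 -` B \<inter> space M) = x 0 -` C \<inter> space M \<and> C \<in> sets borel"
      by (intro exI[of _ "A \<inter> B"]) auto
  qed
next
  case (Some j)
  show ?thesis unfolding Some Int_stable_def E_def option.case
  proof (clarsimp)
    fix A B :: "'w set" assume "A \<in> sets borel" "B \<in> sets borel"
    then show "\<exists>C. w j -` A \<inter> space M \<inter> (w j -` B \<inter> space M) = w j -` C \<inter> space M \<and> C \<in> sets borel"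
      by (intro exI[of _ "A \<inter> B"]) auto
  qed
qed

lemma space_PiM_UNIV: "space (PiM UNIV (\<lambda>_::nat. borel :: 'w measure)) = UNIV"
  by (simp add: space_PiM)

lemma indep_E: "indep_sets E UNIV"
proof (rule indep_setsI)
  fix i show "E i \<subseteq> events" using E_sets by simp
next
  fix A J assume J: "J \<noteq> {}" "J \<subseteq> UNIV" "finite J" and AJ: "\<forall>j\<in>J. A j \<in> E j"
  define J' where "J' = {i. Some i \<in> J}"
  have finJ': "finite J'" unfolding J'_def using finite_vimageI[OF J(3), of Some] by (simp add: vimage_def)
  have "\<forall>i\<in>J'. \<exists>B. B \<in> sets (borel :: 'w measure) \<and> A (Some i) = w i -` B \<inter> space M"
  proof
    fix i assume "i \<in> J'"
    then have "A (Some i) \<in> E (Some i)" using AJ unfolding J'_def by auto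
    then show "\<exists>B. B \<in> sets (borel :: 'w measure) \<and> A (Some i) = w i -` B \<inter> space M"
      unfolding E_def by auto
  qed
  then obtain Bw where Bw: "\<And>i. i \<in> J' \<Longrightarrow> Bw i \<in> sets borel \<and> A (Some i) = w i -` Bw i \<inter> space M"
    by metis
  define W where "W = (\<Inter>i\<in>J'. A (Some i))"
  have probW: "prob W = (\<Prod>i\<in>J'. prob (A (Some i)))" if ne: "J' \<noteq> {}"
  proof -
    have "W = (\<Inter>i\<in>J'. w i -` Bw i \<inter> space M)" unfolding W_def using Bw by auto
    then have "prob W = (\<Prod>i\<in>J'. prob (w i -` Bw i \<inter> space M))"
      using indep_varsD[OF w_indep ne finJ', of Bw] Bw by simp
    also have "\<dots> = (\<Prod>i\<in>J'. prob (A (Some i)))" using Bw by (intro prod.cong) auto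
    finally show ?thesis .
  qed
  have JS: "J - {None} = Some ` J'"
  proof (rule set_eqI)
    fix j show "j \<in> J - {None} \<longleftrightarrow> j \<in> Some ` J'" unfolding J'_def by (cases j) auto
  qed
  show "prob (\<Inter> (A ` J)) = (\<Prod>j\<in>J. prob (A j))"
  proof (cases "None \<in> J")
    case False
    then have "J = Some ` J'" using JS by auto
    moreover then have "J' \<noteq> {}" using J by auto
    ultimately show ?thesis using probW unfolding W_def
      by (simp add: prod.reindex image_image)
  next
    case True
    then have Jeq: "J = insert None (Some ` J')" using JS by auto
    show ?thesis
    proof (cases "J' = {}")
      case True then show ?thesis using Jeq by simp
    next
      case False
      have "A None \<in> E None" using AJ \<open>None \<in> J\<close> by auto
      then obtain B0 where B0: "B0 \<in> sets borel" "A None = x 0 -` B0 \<inter> space M"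
        unfolding E_def by auto
      define S where "S = {h :: nat \<Rightarrow> 'w. \<forall>i\<in>J'. h i \<in> Bw i}"
      have "S = (\<Inter>i\<in>J'. (\<lambda>h. h i) -` Bw i \<inter> space (PiM UNIV (\<lambda>_. borel)))"
        unfolding S_def space_PiM_UNIV using False by auto
      also have "\<dots> \<in> sets (PiM UNIV (\<lambda>_. borel))"
      proof (intro sets.finite_INT finJ' False)
        fix i assume "i \<in> J'"
        have "(\<lambda>h. h i) \<in> measurable (PiM UNIV (\<lambda>_::nat. borel :: 'w measure)) borel"
          by (rule measurable_component_singleton) simp
        then show "(\<lambda>h. h i) -` Bw i \<inter> space (PiM UNIV (\<lambda>_. borel)) \<in> sets (PiM UNIV (\<lambda>_. borel))"
          using Bw[OF \<open>i \<in> J'\<close>] by (intro measurable_sets) auto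
      qed
      finally have Ssets: "S \<in> sets (PiM UNIV (\<lambda>_. borel))" .
      have "W = (\<lambda>\<omega>. \<lambda>k. w k \<omega>) -` S \<inter> space M"
        unfolding W_def S_def using Bw False by auto
      then have Wv: "W \<in> sets (vimage_algebra (space M) (\<lambda>\<omega>. \<lambda>k. w k \<omega>) (PiM UNIV (\<lambda>_. borel)))"
        using Ssets by (auto simp: sets_vimage_algebra)
      have A0v: "A None \<in> sets (vimage_algebra (space M) (x 0) borel)"
        using B0 by (auto simp: sets_vimage_algebra)
      have "\<Inter> (A ` J) = A None \<inter> W" unfolding Jeq W_def using False by auto
      then have "prob (\<Inter> (A ` J)) = prob (A None) * prob W"
        using indep_setD[OF x0_w_indep A0v Wv] by simp
      also have "\<dots> = (\<Prod>j\<in>J. prob (A j))"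
        unfolding probW[OF False] Jeq using finJ'
        by (subst prod.insert) (auto simp: prod.reindex)
      finally show ?thesis .
    qed
  qed
qed

lemma indep_F_w:
  assumes A: "A \<in> sets (F k)" and B: "B \<in> sets borel"
  shows "prob (A \<inter> (w k -` B \<inter> space M)) = prob A * prob (w k -` B \<inter> space M)"
proof -
  define I where "I b = (if b then Ik k else {Some k})" for b
  have ind: "indep_sets (\<lambda>j. sigma_sets (space M) (\<Union>i\<in>I j. E i)) UNIV"
  proof (rule indep_sets_collect_sigma)
    show "indep_sets E (\<Union>j\<in>UNIV. I j)" using indep_sets_mono_index[OF _ indep_E] by simp
    show "Int_stable (E i)" for i by (rule Int_stable_E)
    show "disjoint_family_on I UNIV"
      unfolding disjoint_family_on_def I_def Ik_def by auto
  qed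
  define A' where "A' b = (if b then A else w k -` B \<inter> space M)" for b
  have "\<forall>j\<in>UNIV. A' j \<in> sigma_sets (space M) (\<Union>i\<in>I j. E i)"
  proof
    fix j :: bool
    show "A' j \<in> sigma_sets (space M) (\<Union>i\<in>I j. E i)"
    proof (cases j)
      case True then show ?thesis using A unfolding A'_def I_def sets_F by simp
    next
      case False
      have "w k -` B \<inter> space M \<in> E (Some k)" using B unfolding E_def by auto
      then show ?thesis using False unfolding A'_def I_def by (auto intro: sigma_sets.Basic)
    qed
  qed
  from indep_setsD[OF ind _ _ _ this] have "prob (\<Inter>j\<in>UNIV. A' j) = (\<Prod>j\<in>UNIV. prob (A' j))"
    by simp
  then show ?thesis unfolding A'_def UNIV_bool by (simp add: Int_commute mult.commute)
qed

end

context bsys begin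

abbreviation R where "R k \<equiv> restr_to_subalg M (F k)"

lemma g_meas: "g \<in> borel_measurable lborel"
  using w_dist[of 0] by (rule distributed_borel_measurable)

lemma D_eq: "distr M lborel (w k) = density lborel g"
  using w_dist[of k] by (rule distributed_distr_eq_density)

lemma w_meas_lborel: "w k \<in> measurable M lborel"
  using w_meas[of k] by (simp add: measurable_lborel2)

lemma prob_D: "prob_space (density lborel g)"
  using prob_space_distr[OF w_meas_lborel[of 0]] D_eq[of 0] by simp

lemma sf_R: "sigma_finite_measure (R k)"
  by (rule finite_measure.sigma_finite_measure[OF finite_measure_restr_to_subalg[OF sub_F]])
     (simp add: finite_measure_axioms)

lemma sets_R: "sets (R k) = sets (F k)"
  by (rule sets_restr_to_subalg[OF sub_F])

lemma space_R: "space (R k) = space M"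
  by (rule space_restr_to_subalg)

lemma pairmap_meas: "(\<lambda>\<omega>. (\<omega>, w k \<omega>)) \<in> measurable M (R j \<Otimes>\<^sub>M lborel)"
proof (rule measurable_Pair)
  show "(\<lambda>\<omega>. \<omega>) \<in> measurable M (R j)"
  proof (rule measurableI)
    fix A assume "A \<in> sets (R j)"
    then have "A \<in> sets M" using sub_F[of j] sets_R[of j] by (auto simp: subalgebra_def)
    then show "(\<lambda>\<omega>. \<omega>) -` A \<inter> space M \<in> sets M" by simp
  qed (simp add: space_R)
  show "w k \<in> measurable M lborel" by (rule w_meas_lborel)
qed

lemma distr_pair: "distr M (R k \<Otimes>\<^sub>M lborel) (\<lambda>\<omega>. (\<omega>, w k \<omega>)) = R k \<Otimes>\<^sub>M density lborel g"
proof (rule pair_measure_eqI[symmetric])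
  show "sigma_finite_measure (R k)" by (rule sf_R)
  show "sigma_finite_measure (density lborel g)"
    using prob_D by (rule finite_measure.sigma_finite_measure[OF prob_space.finite_measure])
  show "sets (R k \<Otimes>\<^sub>M density lborel g) = sets (distr M (R k \<Otimes>\<^sub>M lborel) (\<lambda>\<omega>. (\<omega>, w k \<omega>)))"
    unfolding sets_distr by (rule sets_pair_measure_cong) simp_all
next
  fix A B assume A: "A \<in> sets (R k)" and B: "B \<in> sets (density lborel g)"
  have AF: "A \<in> sets (F k)" using A sets_R by simp
  have AM: "A \<in> sets M" using AF sub_F[of k] by (auto simp: subalgebra_def)
  have Bb: "B \<in> sets borel" using B by simp
  have "emeasure (R k) A = emeasure M A" using AF by (simp add: emeasure_restr_to_subalg[OF sub_F])
  moreover have "emeasure (density lborel g) B = emeasure M (w k -` B \<inter> space M)"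
    unfolding D_eq[of k, symmetric] using B w_meas_lborel[of k] by (subst emeasure_distr) auto
  moreover have "emeasure (distr M (R k \<Otimes>\<^sub>M lborel) (\<lambda>\<omega>. (\<omega>, w k \<omega>))) (A \<times> B)
      = emeasure M (A \<inter> (w k -` B \<inter> space M))"
  proof -
    have "A \<times> B \<in> sets (R k \<Otimes>\<^sub>M lborel)" using A Bb by auto
    then have "emeasure (distr M (R k \<Otimes>\<^sub>M lborel) (\<lambda>\<omega>. (\<omega>, w k \<omega>))) (A \<times> B)
        = emeasure M ((\<lambda>\<omega>. (\<omega>, w k \<omega>)) -` (A \<times> B) \<inter> space M)"
      by (rule emeasure_distr[OF pairmap_meas])
    also have "(\<lambda>\<omega>. (\<omega>, w k \<omega>)) -` (A \<times> B) \<inter> space M = A \<inter> (w k -` B \<inter> space M)"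
      using sets.sets_into_space[OF AM] by auto
    finally show ?thesis .
  qed
  moreover have "prob (A \<inter> (w k -` B \<inter> space M)) = prob A * prob (w k -` B \<inter> space M)"
    using indep_F_w[OF AF Bb] .
  ultimately show "emeasure (R k) A * emeasure (density lborel g) B =
      emeasure (distr M (R k \<Otimes>\<^sub>M lborel) (\<lambda>\<omega>. (\<omega>, w k \<omega>))) (A \<times> B)"
    by (simp add: emeasure_eq_measure ennreal_mult'')
qed

lemma key_pair:
  assumes H: "H \<in> borel_measurable (R k \<Otimes>\<^sub>M lborel)"
  shows "(\<integral>\<^sup>+\<omega>. H (\<omega>, w k \<omega>) \<partial>M) = (\<integral>\<^sup>+\<omega>. (\<integral>\<^sup>+v. g v * H (\<omega>, v) \<partial>lborel) \<partial>M)"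
proof -
  interpret D: prob_space "density lborel g" by (rule prob_D)
  have eqs: "sets (R k \<Otimes>\<^sub>M density lborel g) = sets (R k \<Otimes>\<^sub>M lborel)"
    by (rule sets_pair_measure_cong) simp_all
  have H': "H \<in> borel_measurable (R k \<Otimes>\<^sub>M density lborel g)"
    using H by (simp only: measurable_cong_sets[OF eqs refl])
  have "(\<integral>\<^sup>+\<omega>. H (\<omega>, w k \<omega>) \<partial>M) = (\<integral>\<^sup>+p. H p \<partial>distr M (R k \<Otimes>\<^sub>M lborel) (\<lambda>\<omega>. (\<omega>, w k \<omega>)))"
    using H by (subst nn_integral_distr[OF pairmap_meas]) auto
  also have "\<dots> = (\<integral>\<^sup>+p. H p \<partial>(R k \<Otimes>\<^sub>M density lborel g))" by (simp add: distr_pair)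
  also have "\<dots> = (\<integral>\<^sup>+\<omega>. (\<integral>\<^sup>+v. H (\<omega>, v) \<partial>density lborel g) \<partial>R k)"
    using H' by (simp add: D.nn_integral_fst)
  also have "\<dots> = (\<integral>\<^sup>+\<omega>. (\<integral>\<^sup>+v. g v * H (\<omega>, v) \<partial>lborel) \<partial>R k)"
  proof (intro nn_integral_cong)
    fix \<omega> assume "\<omega> \<in> space (R k)"
    then have "(\<lambda>v. H (\<omega>, v)) \<in> borel_measurable lborel"
      using H by (intro measurable_Pair2) auto
    then show "(\<integral>\<^sup>+v. H (\<omega>, v) \<partial>density lborel g) = (\<integral>\<^sup>+v. g v * H (\<omega>, v) \<partial>lborel)"
      using g_meas by (simp add: nn_integral_density)
  qed
  also have "\<dots> = (\<integral>\<^sup>+\<omega>. (\<integral>\<^sup>+v. g v * H (\<omega>, v) \<partial>lborel) \<partial>M)"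
  proof (rule nn_integral_subalgebra2[OF sub_F])
    have "(\<lambda>p. g (snd p) * H p) \<in> borel_measurable (R k \<Otimes>\<^sub>M lborel)"
      using H g_meas by measurable
    then have "(\<lambda>\<omega>. \<integral>\<^sup>+v. g (snd (\<omega>, v)) * H (\<omega>, v) \<partial>lborel) \<in> borel_measurable (R k)"
      by (rule lborel.borel_measurable_nn_integral_fst)
    then show "(\<lambda>\<omega>. \<integral>\<^sup>+v. g v * H (\<omega>, v) \<partial>lborel) \<in> borel_measurable (F k)"
      by (intro measurable_in_subalg'[OF sub_F]) simp
  qed
  finally show ?thesis .
qed

end

context bsys begin

lemma q_cont_x': "continuous_on UNIV (\<lambda>x'. q th a b x')"
proof -
  have "continuous_on UNIV (\<lambda>x'. (\<lambda>(x', xx, uu). q th xx uu x') (x', a, b))"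
    by (rule continuous_on_compose2[OF q_cont[of th]]) (auto intro!: continuous_intros)
  then show ?thesis by simp
qed

lemma q_meas_x': "(\<lambda>x'. q th a b x') \<in> borel_measurable borel"
  by (rule borel_measurable_continuous_onI[OF q_cont_x'])

lemma q_cont_joint: "continuous_on UNIV (\<lambda>p::'x \<times> 'u \<times> 'x. q th (fst p) (fst (snd p)) (snd (snd p)))"
proof -
  have "continuous_on UNIV (\<lambda>p::'x \<times> 'u \<times> 'x. (\<lambda>(x', xx, uu). q th xx uu x') (snd (snd p), fst p, fst (snd p)))"
    by (rule continuous_on_compose2[OF q_cont[of th]]) (auto intro!: continuous_intros)
  then show ?thesis by (simp add: case_prod_beta)
qed

lemma borel3: "h \<in> borel_measurable (borel :: ('x \<times> 'u \<times> 'x) measure) \<Longrightarrow>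
   h \<in> borel_measurable (borel \<Otimes>\<^sub>M borel \<Otimes>\<^sub>M borel)"
  by (simp only: borel_prod)

lemma q_jmeas: "(\<lambda>p::'x \<times> 'u \<times> 'x. q th (fst p) (fst (snd p)) (snd (snd p))) \<in> borel_measurable (borel \<Otimes>\<^sub>M borel \<Otimes>\<^sub>M borel)"
  by (rule borel3, rule borel_measurable_continuous_onI[OF q_cont_joint])

lemma fab_meas: "(\<lambda>v. f a b v th) \<in> measurable lborel lborel"
proof -
  have "(\<lambda>v. (a, b, v)) \<in> measurable (borel :: 'w measure) (borel \<Otimes>\<^sub>M borel \<Otimes>\<^sub>M borel)"
    by (intro measurable_Pair) auto
  from measurable_compose[OF this f_meas[of th]] show ?thesis
    by (simp add: measurable_lborel1 measurable_lborel2)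
qed

lemma inner_q:
  assumes Phi: "Phi \<in> borel_measurable (borel :: 'x measure)"
  shows "(\<integral>\<^sup>+v. g v * Phi (f a b v th) \<partial>lborel) = (\<integral>\<^sup>+x'. ennreal (q th a b x') * Phi x' \<partial>lborel)"
proof -
  have fm: "(\<lambda>v. f a b v th) \<in> measurable (density lborel g) lborel"
    using fab_meas by (simp add: measurable_cong_sets[OF sets_density refl])
  have "(\<integral>\<^sup>+v. g v * Phi (f a b v th) \<partial>lborel) = (\<integral>\<^sup>+v. Phi (f a b v th) \<partial>density lborel g)"
    using g_meas Phi fab_meas by (subst nn_integral_density) (auto simp: measurable_lborel1 measurable_lborel2)
  also have "\<dots> = (\<integral>\<^sup>+x'. Phi x' \<partial>distr (density lborel g) lborel (\<lambda>v. f a b v th))"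
    using Phi fm by (subst nn_integral_distr) auto
  also have "\<dots> = (\<integral>\<^sup>+x'. Phi x' \<partial>density lborel (\<lambda>x'. ennreal (q th a b x')))"
    by (simp add: q_density)
  also have "\<dots> = (\<integral>\<^sup>+x'. ennreal (q th a b x') * Phi x' \<partial>lborel)"
    using Phi q_meas_x' by (subst nn_integral_density) auto
  finally show ?thesis .
qed

lemma q_int1: "(\<integral>\<^sup>+x'. ennreal (q th a b x') \<partial>lborel) = 1"
proof -
  have "(\<integral>\<^sup>+x'. ennreal (q th a b x') \<partial>lborel) = (\<integral>\<^sup>+v. g v * 1 \<partial>lborel)"
    using inner_q[of "\<lambda>_. 1" a b th] by simp
  also have "\<dots> = emeasure (density lborel g) (space (density lborel g))"
    using g_meas by (simp add: emeasure_density)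
  also have "\<dots> = 1" using prob_space.emeasure_space_1[OF prob_D] by simp
  finally show ?thesis .
qed

lemma xR: "i \<le> k \<Longrightarrow> x i \<in> borel_measurable (R k)"
  by (rule measurable_in_subalg[OF sub_F x_F])

lemma uR: "i \<le> k \<Longrightarrow> u i \<in> borel_measurable (R k)"
  by (rule measurable_in_subalg[OF sub_F u_F])

lemma key_next:
  assumes Y: "Y \<in> borel_measurable (F k)"
    and psi: "psi \<in> borel_measurable (borel \<Otimes>\<^sub>M borel \<Otimes>\<^sub>M borel)"
  shows "(\<integral>\<^sup>+\<omega>. Y \<omega> * psi (x k \<omega>, u k \<omega>, x (Suc k) \<omega>) \<partial>M)
       = (\<integral>\<^sup>+\<omega>. Y \<omega> * (\<integral>\<^sup>+x'. ennreal (q th_star (x k \<omega>) (u k \<omega>) x') * psi (x k \<omega>, u k \<omega>, x') \<partial>lborel) \<partial>M)"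
proof -
  define H where "H p = Y (fst p) * psi (x k (fst p), u k (fst p), f (x k (fst p)) (u k (fst p)) (snd p) th_star)" for p
  have YR: "Y \<in> borel_measurable (R k)" by (rule measurable_in_subalg[OF sub_F Y])
  have x1: "(\<lambda>p. x k (fst p)) \<in> borel_measurable (R k \<Otimes>\<^sub>M (lborel :: 'w measure))"
    by (rule measurable_compose[OF measurable_fst xR]) simp
  have u1: "(\<lambda>p. u k (fst p)) \<in> borel_measurable (R k \<Otimes>\<^sub>M (lborel :: 'w measure))"
    by (rule measurable_compose[OF measurable_fst uR]) simp
  have s1: "(\<lambda>p. snd p) \<in> borel_measurable (R k \<Otimes>\<^sub>M (lborel :: 'w measure))"
    using measurable_snd[of "R k" "lborel :: 'w measure"] by (simp add: measurable_lborel2)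
  have "(\<lambda>p. (x k (fst p), u k (fst p), snd p)) \<in> measurable (R k \<Otimes>\<^sub>M (lborel :: 'w measure)) (borel \<Otimes>\<^sub>M borel \<Otimes>\<^sub>M borel)"
    using x1 u1 s1 by (intro measurable_Pair) auto
  from measurable_compose[OF this f_meas[of th_star]]
  have f1: "(\<lambda>p. f (x k (fst p)) (u k (fst p)) (snd p) th_star) \<in> borel_measurable (R k \<Otimes>\<^sub>M (lborel :: 'w measure))"
    by simp
  have "(\<lambda>p. (x k (fst p), u k (fst p), f (x k (fst p)) (u k (fst p)) (snd p) th_star)) \<in> measurable (R k \<Otimes>\<^sub>M (lborel :: 'w measure)) (borel \<Otimes>\<^sub>M borel \<Otimes>\<^sub>M borel)"
    using x1 u1 f1 by (intro measurable_Pair) auto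
  from measurable_compose[OF this psi]
  have p1: "(\<lambda>p. psi (x k (fst p), u k (fst p), f (x k (fst p)) (u k (fst p)) (snd p) th_star)) \<in> borel_measurable (R k \<Otimes>\<^sub>M (lborel :: 'w measure))" .
  have Hm: "H \<in> borel_measurable (R k \<Otimes>\<^sub>M (lborel :: 'w measure))"
    unfolding H_def using measurable_compose[OF measurable_fst YR] p1 by (intro borel_measurable_times_ennreal) auto
  have "(\<integral>\<^sup>+\<omega>. Y \<omega> * psi (x k \<omega>, u k \<omega>, x (Suc k) \<omega>) \<partial>M) = (\<integral>\<^sup>+\<omega>. H (\<omega>, w k \<omega>) \<partial>M)"
    unfolding H_def by (simp add: dyn)
  also have "\<dots> = (\<integral>\<^sup>+\<omega>. (\<integral>\<^sup>+v. g v * H (\<omega>, v) \<partial>lborel) \<partial>M)"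
    by (rule key_pair[OF Hm])
  also have "\<dots> = (\<integral>\<^sup>+\<omega>. Y \<omega> * (\<integral>\<^sup>+x'. ennreal (q th_star (x k \<omega>) (u k \<omega>) x') * psi (x k \<omega>, u k \<omega>, x') \<partial>lborel) \<partial>M)"
  proof (intro nn_integral_cong)
    fix \<omega> assume "\<omega> \<in> space M"
    have pm: "(\<lambda>x'. psi (x k \<omega>, u k \<omega>, x')) \<in> borel_measurable borel"
      using psi by (intro measurable_compose[OF _ psi] measurable_Pair) auto
    have pm2: "(\<lambda>v. psi (x k \<omega>, u k \<omega>, f (x k \<omega>) (u k \<omega>) v th_star)) \<in> borel_measurable lborel"
    proof -
      have pm': "(\<lambda>x'. psi (x k \<omega>, u k \<omega>, x')) \<in> borel_measurable lborel"
        using pm by (simp add: measurable_lborel1)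
      show ?thesis using measurable_compose[OF fab_meas pm'] by simp
    qed
    have "(\<integral>\<^sup>+v. g v * H (\<omega>, v) \<partial>lborel) = (\<integral>\<^sup>+v. Y \<omega> * (g v * psi (x k \<omega>, u k \<omega>, f (x k \<omega>) (u k \<omega>) v th_star)) \<partial>lborel)"
      unfolding H_def by (intro nn_integral_cong) (simp add: ac_simps)
    also have "\<dots> = Y \<omega> * (\<integral>\<^sup>+v. g v * psi (x k \<omega>, u k \<omega>, f (x k \<omega>) (u k \<omega>) v th_star) \<partial>lborel)"
      using g_meas pm2 by (intro nn_integral_cmult) auto
    also have "\<dots> = Y \<omega> * (\<integral>\<^sup>+x'. ennreal (q th_star (x k \<omega>) (u k \<omega>) x') * psi (x k \<omega>, u k \<omega>, x') \<partial>lborel)"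
      by (simp add: inner_q[OF pm])
    finally show "(\<integral>\<^sup>+v. g v * H (\<omega>, v) \<partial>lborel) = \<dots>" .
  qed
  finally show ?thesis .
qed

end

context bsys begin

definition Pr :: "('x \<Rightarrow> 'u \<Rightarrow> 'x \<Rightarrow> real) \<Rightarrow> nat \<Rightarrow> 'a \<Rightarrow> real" where
  "Pr phi' k \<omega> = (\<Prod>i<k. phi' (x i \<omega>) (u i \<omega>) (x (Suc i) \<omega>))"

definition good :: "('x \<Rightarrow> 'u \<Rightarrow> 'x \<Rightarrow> real) \<Rightarrow> bool" where
  "good p \<longleftrightarrow> (\<forall>a b c. 0 \<le> p a b c)
     \<and> (\<lambda>z. p (fst z) (fst (snd z)) (snd (snd z))) \<in> borel_measurable (borel \<Otimes>\<^sub>M borel \<Otimes>\<^sub>M borel)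
     \<and> (\<forall>a b. (\<integral>\<^sup>+x'. ennreal (q th_star a b x') * ennreal (p a b x') \<partial>lborel) = 1)"

lemma Pr_nn: "good p \<Longrightarrow> 0 \<le> Pr p k \<omega>"
  unfolding Pr_def good_def by (auto intro: prod_nonneg)

lemma step_meas:
  assumes "good p" "i < k"
  shows "(\<lambda>\<omega>. p (x i \<omega>) (u i \<omega>) (x (Suc i) \<omega>)) \<in> borel_measurable (F k)"
proof -
  have "(\<lambda>\<omega>. (x i \<omega>, u i \<omega>, x (Suc i) \<omega>)) \<in> measurable (F k) (borel \<Otimes>\<^sub>M borel \<Otimes>\<^sub>M borel)"
    using assms(2) by (intro measurable_Pair x_F u_F) auto
  from measurable_compose[OF this, of "\<lambda>z. p (fst z) (fst (snd z)) (snd (snd z))" borel] assms(1)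
  show ?thesis unfolding good_def by simp
qed

lemma Pr_meas: "good p \<Longrightarrow> Pr p k \<in> borel_measurable (F k)"
  unfolding Pr_def by (intro borel_measurable_prod step_meas) auto

lemma Pr_meas_M: "good p \<Longrightarrow> Pr p k \<in> borel_measurable M"
  by (rule F_meas_M[OF Pr_meas])

lemma Pr_mart:
  assumes p: "good p" and A: "A \<in> sets (F k)"
  shows "(\<integral>\<^sup>+\<omega>. ennreal (Pr p (Suc k) \<omega>) * indicator A \<omega> \<partial>M) = (\<integral>\<^sup>+\<omega>. ennreal (Pr p k \<omega>) * indicator A \<omega> \<partial>M)"
proof -
  have pn: "\<And>a b c. 0 \<le> p a b c" and pm: "(\<lambda>z. p (fst z) (fst (snd z)) (snd (snd z))) \<in> borel_measurable (borel \<Otimes>\<^sub>M borel \<Otimes>\<^sub>M borel)"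
    and pi: "\<And>a b. (\<integral>\<^sup>+x'. ennreal (q th_star a b x') * ennreal (p a b x') \<partial>lborel) = 1"
    using p unfolding good_def by auto
  define Y where "Y \<omega> = ennreal (Pr p k \<omega>) * indicator A \<omega>" for \<omega>
  have Y: "Y \<in> borel_measurable (F k)"
    unfolding Y_def using Pr_meas[OF p] A by (intro borel_measurable_times_ennreal) auto
  have psi: "(\<lambda>z. ennreal (p (fst z) (fst (snd z)) (snd (snd z)))) \<in> borel_measurable (borel \<Otimes>\<^sub>M borel \<Otimes>\<^sub>M borel)"
    using pm by measurable
  have "(\<integral>\<^sup>+\<omega>. ennreal (Pr p (Suc k) \<omega>) * indicator A \<omega> \<partial>M)
      = (\<integral>\<^sup>+\<omega>. Y \<omega> * (\<lambda>z. ennreal (p (fst z) (fst (snd z)) (snd (snd z)))) (x k \<omega>, u k \<omega>, x (Suc k) \<omega>) \<partial>M)"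
    unfolding Y_def Pr_def using pn
    by (intro nn_integral_cong) (simp add: ennreal_mult' prod_nonneg ac_simps)
  also have "\<dots> = (\<integral>\<^sup>+\<omega>. Y \<omega> * (\<integral>\<^sup>+x'. ennreal (q th_star (x k \<omega>) (u k \<omega>) x') * ennreal (p (x k \<omega>) (u k \<omega>) x') \<partial>lborel) \<partial>M)"
    using key_next[OF Y psi] by simp
  also have "\<dots> = (\<integral>\<^sup>+\<omega>. ennreal (Pr p k \<omega>) * indicator A \<omega> \<partial>M)"
    unfolding Y_def pi by simp
  finally show ?thesis .
qed

lemma Pr_int: "good p \<Longrightarrow> (\<integral>\<^sup>+\<omega>. ennreal (Pr p k \<omega>) \<partial>M) = 1"
proof (induction k)
  case 0
  then show ?case by (simp add: Pr_def emeasure_space_1)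
next
  case (Suc k)
  have sp: "space M \<in> sets (F k)" using sets.top[of "F k"] space_F by simp
  have "(\<integral>\<^sup>+\<omega>. ennreal (Pr p (Suc k) \<omega>) \<partial>M) = (\<integral>\<^sup>+\<omega>. ennreal (Pr p (Suc k) \<omega>) * indicator (space M) \<omega> \<partial>M)"
    by (intro nn_integral_cong) simp
  also have "\<dots> = (\<integral>\<^sup>+\<omega>. ennreal (Pr p k \<omega>) * indicator (space M) \<omega> \<partial>M)"
    by (rule Pr_mart[OF Suc.prems sp])
  also have "\<dots> = (\<integral>\<^sup>+\<omega>. ennreal (Pr p k \<omega>) \<partial>M)"
    by (intro nn_integral_cong) simp
  finally show ?case using Suc by simp
qed

lemma Pr_bdd: "good p \<Longrightarrow> AE \<omega> in M. \<exists>K::real. \<forall>k. Pr p k \<omega> \<le> K"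
proof -
  assume p: "good p"
  have "AE \<omega> in M. \<exists>K::real. \<forall>k. (\<lambda>k \<omega>. ennreal (Pr p k \<omega>)) k \<omega> \<le> ennreal K"
  proof (rule ville_bounded[of M F])
    show "subalgebra M (F k)" for k by (rule sub_F)
    show "sets (F k) \<subseteq> sets (F (Suc k))" for k by (rule F_mono_Suc)
    show "(\<lambda>\<omega>. ennreal (Pr p k \<omega>)) \<in> borel_measurable (F k)" for k
      using Pr_meas[OF p] by measurable
    show "\<And>k A. A \<in> sets (F k) \<Longrightarrow> (\<integral>\<^sup>+\<omega>. ennreal (Pr p (Suc k) \<omega>) * indicator A \<omega> \<partial>M) = (\<integral>\<^sup>+\<omega>. ennreal (Pr p k \<omega>) * indicator A \<omega> \<partial>M)"
      by (rule Pr_mart[OF p])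
    show "(\<integral>\<^sup>+\<omega>. ennreal (Pr p 0 \<omega>) \<partial>M) < \<infinity>" using Pr_int[OF p] by simp
  qed
  then show ?thesis
  proof (rule AE_mp, intro AE_I2 impI)
    fix \<omega> assume "\<exists>K::real. \<forall>k. ennreal (Pr p k \<omega>) \<le> ennreal K"
    then obtain K where K: "\<And>k. ennreal (Pr p k \<omega>) \<le> ennreal K" by blast
    have "Pr p k \<omega> \<le> max K 0" for k
    proof -
      have "ennreal (Pr p k \<omega>) \<le> ennreal (max K 0)" using K[of k] by (cases "K \<ge> 0") (auto simp: max_def ennreal_neg)
      then show ?thesis by (subst (asm) ennreal_le_iff) auto
    qed
    then show "\<exists>K::real. \<forall>k. Pr p k \<omega> \<le> K" by blast
  qed
qed

end

lemma geo_summable_on: "(\<lambda>t::'t::countable. (1/2::real) ^ to_nat t) summable_on A"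
proof -
  have s1: "summable (\<lambda>n::nat. (1/2::real) ^ n)" by (rule summable_geometric) simp
  have s2: "summable (\<lambda>n::nat. norm ((1/2::real) ^ n))" using s1 by simp
  have "((\<lambda>n::nat. (1/2::real) ^ n) has_sum (\<Sum>n. (1/2::real) ^ n)) UNIV"
    by (rule norm_summable_imp_has_sum[OF s2 summable_sums[OF s1]])
  then have "(\<lambda>n::nat. (1/2::real) ^ n) summable_on UNIV" by (rule has_sum_imp_summable)
  then have "(\<lambda>n::nat. (1/2::real) ^ n) summable_on (to_nat ` A)"
    by (rule summable_on_subset_banach) simp
  then show ?thesis
    using summable_on_reindex[of to_nat A "\<lambda>n::nat. (1/2::real) ^ n"]
    by (simp add: inj_on_def o_def)
qed

lemma blind_sep:
  fixes q :: "'th::countable \<Rightarrow> 'x::euclidean_space \<Rightarrow> 'u \<Rightarrow> 'x \<Rightarrow> real"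
  assumes pos: "\<And>th a b x'. q th a b x' > 0"
    and int1: "\<And>th a b. (\<integral>\<^sup>+x'. ennreal (q th a b x') \<partial>lborel) = 1"
    and qmeas: "\<And>th a b. (\<lambda>x'. q th a b x') \<in> borel_measurable borel"
    and BR: "blind_region q C = {}"
    and ne: "th \<noteq> th_star"
  shows "\<exists>eta\<in>C. \<exists>x'. q th (fst eta) (snd eta) x' \<noteq> q th_star (fst eta) (snd eta) x'"
proof (rule ccontr)
  assume "\<not> ?thesis"
  then have eqth: "\<forall>eta\<in>C. \<forall>x'. q th (fst eta) (snd eta) x' = q th_star (fst eta) (snd eta) x'" by blast
  define S where "S = {t. \<forall>eta\<in>C. \<forall>x'. q t (fst eta) (snd eta) x' = q th_star (fst eta) (snd eta) x'}"
  have thS: "th \<in> S" and tsS: "th_star \<in> S" using eqth unfolding S_def by auto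
  define w :: "'th \<Rightarrow> real" where "w t = (1/2) ^ to_nat t" for t
  have wpos: "w t > 0" for t unfolding w_def by simp
  have wsum: "w summable_on A" for A unfolding w_def by (rule geo_summable_on)
  define W where "W = infsum w (S - {th_star})"
  have Wpos: "W > 0"
  proof -
    have "(w has_sum infsum w (S - {th_star, th})) (S - {th_star, th})"
      using wsum by (rule has_sum_infsum)
    from has_sum_insert[OF _ this, of th]
    have hs0: "(w has_sum w th + infsum w (S - {th_star, th})) (insert th (S - {th_star, th}))" by simp
    have hs: "(w has_sum w th + infsum w (S - {th_star, th})) (S - {th_star})"
    proof -
      have "insert th (S - {th_star, th}) = S - {th_star}" using thS ne by auto
      then show ?thesis using hs0 by simp
    qed
    then have "W = w th + infsum w (S - {th_star, th})" unfolding W_def by (rule infsumI)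
    moreover have "infsum w (S - {th_star, th}) \<ge> 0" using wpos by (intro infsum_nonneg) (auto intro: less_imp_le)
    ultimately show ?thesis using wpos[of th] by simp
  qed
  define c where "c t = (if t = th_star then - W else w t)" for t
  have bz: "blind_zone q C S"
    unfolding blind_zone_def
  proof (intro conjI allI impI)
    show "\<exists>a\<in>S. \<exists>b\<in>S. a \<noteq> b" using thS tsS ne by blast
    show "obs_nondist q C S"
      unfolding obs_nondist_def
    proof (intro exI[of _ c] conjI ballI allI)
      fix t assume "t \<in> S" then show "c t \<noteq> 0" using Wpos wpos[of t] unfolding c_def by auto
    next
      fix eta x' assume "eta \<in> C"
      have cs: "(c has_sum 0) S"
      proof -
        have "(w has_sum W) (S - {th_star})" unfolding W_def using wsum by (rule has_sum_infsum)
        then have "(c has_sum W) (S - {th_star})"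
          by (rule has_sum_cong[THEN iffD2, rotated]) (auto simp: c_def)
        from has_sum_insert[OF _ this, of th_star]
        show ?thesis using tsS by (simp add: c_def insert_absorb)
      qed
      have "((\<lambda>t. c t * q th_star (fst eta) (snd eta) x') has_sum 0 * q th_star (fst eta) (snd eta) x') S"
        by (rule has_sum_cmult_left[OF cs])
      then have "((\<lambda>t. c t * q th_star (fst eta) (snd eta) x') has_sum 0) S" by simp
      then show "((\<lambda>t. c t * q t (fst eta) (snd eta) x') has_sum 0) S"
        by (rule has_sum_cong[THEN iffD2, rotated]) (use \<open>eta \<in> C\<close> in \<open>auto simp: S_def\<close>)
    qed
  next
    fix t assume tS: "t \<notin> S"
    show "\<not> obs_nondist q C (insert t S)"
    proof
      assume "obs_nondist q C (insert t S)"
      then obtain c' where c'nz: "\<And>s. s \<in> insert t S \<Longrightarrow> c' s \<noteq> 0"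
        and c'h: "\<And>eta x'. eta \<in> C \<Longrightarrow> ((\<lambda>s. c' s * q s (fst eta) (snd eta) x') has_sum 0) (insert t S)"
        unfolding obs_nondist_def by blast
      from tS obtain eta x0 where eta: "eta \<in> C" and x0: "q t (fst eta) (snd eta) x0 \<noteq> q th_star (fst eta) (snd eta) x0"
        unfolding S_def by blast
      define a where "a = fst eta" define b where "b = snd eta"
      define Q where "Q x' = q th_star a b x'" for x'
      have Qpos: "Q x' > 0" for x' unfolding Q_def by (rule pos)
      have csum: "c' summable_on S"
      proof -
        have "(\<lambda>s. c' s * q s a b x0) summable_on (insert t S)"
          using c'h[OF eta, of x0] unfolding a_def b_def by (rule has_sum_imp_summable)
        then have "(\<lambda>s. c' s * q s a b x0) summable_on S"
          by (rule summable_on_subset_banach) auto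
        then have "(\<lambda>s. c' s * Q x0) summable_on S"
          by (rule summable_on_cong[THEN iffD1, rotated]) (auto simp: S_def Q_def a_def b_def eta)
        then show ?thesis using summable_on_cmult_left'[of "Q x0" c' S] Qpos[of x0] by simp
      qed
      define C0 where "C0 = infsum c' S"
      have lin: "c' t * q t a b x' + C0 * Q x' = 0" for x'
      proof -
        have "((\<lambda>s. c' s * Q x') has_sum C0 * Q x') S"
          unfolding C0_def by (rule has_sum_cmult_left[OF has_sum_infsum[OF csum]])
        then have "((\<lambda>s. c' s * q s a b x') has_sum C0 * Q x') S"
          by (rule has_sum_cong[THEN iffD2, rotated]) (auto simp: S_def Q_def a_def b_def eta)
        from has_sum_insert[OF tS this]
        have "((\<lambda>s. c' s * q s a b x') has_sum c' t * q t a b x' + C0 * Q x') (insert t S)" .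
        from has_sum_unique[OF this c'h[OF eta, of x', folded a_def b_def]] show ?thesis .
      qed
      have ct: "c' t \<noteq> 0" using c'nz by simp
      define mu where "mu = - C0 / c' t"
      have qt: "q t a b x' = mu * Q x'" for x'
      proof -
        have "c' t * q t a b x' = - C0 * Q x'" using lin[of x'] by linarith
        then show ?thesis unfolding mu_def using ct by (simp add: divide_simps) (simp add: ac_simps)
      qed
      have mupos: "mu > 0"
      proof -
        have "0 < mu * Q x0" using qt[of x0] pos[of t a b x0] by simp
        then show ?thesis using Qpos[of x0] by (simp add: zero_less_mult_iff)
      qed
      have "1 = (\<integral>\<^sup>+x'. ennreal (q t a b x') \<partial>lborel)" using int1 by simp
      also have "\<dots> = (\<integral>\<^sup>+x'. ennreal mu * ennreal (Q x') \<partial>lborel)"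
      proof (intro nn_integral_cong)
        fix z
        have "0 \<le> Q z" using Qpos[of z] by simp
        then show "ennreal (q t a b z) = ennreal mu * ennreal (Q z)"
          using mupos by (simp add: qt ennreal_mult)
      qed
      also have "\<dots> = ennreal mu * (\<integral>\<^sup>+x'. ennreal (Q x') \<partial>lborel)"
      proof (rule nn_integral_cmult)
        show "(\<lambda>x'. ennreal (Q x')) \<in> borel_measurable lborel"
          using qmeas[of th_star a b] unfolding Q_def by (simp add: measurable_lborel1)
      qed
      also have "\<dots> = ennreal mu" unfolding Q_def using int1 by simp
      finally have "ennreal mu = 1" by simp
      then have "mu = 1" by simp
      then have "q t a b x0 = q th_star a b x0" using qt unfolding Q_def by simp
      then show False using x0 unfolding a_def b_def by simp
    qed
  qed
  then have "th_star \<in> blind_region q C" unfolding blind_region_def using tsS by blast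
  then show False using BR by simp
qed

lemma pos_integral_cont:
  fixes h :: "'x::euclidean_space \<Rightarrow> real"
  assumes cont: "continuous_on UNIV h" and nn: "\<And>y. 0 \<le> h y" and pos: "h x0 > 0"
  shows "(\<integral>\<^sup>+y. ennreal (h y) \<partial>lborel) > 0"
proof -
  obtain d where d: "d > 0" "\<And>y. dist y x0 < d \<Longrightarrow> dist (h y) (h x0) < h x0 / 2"
    using cont pos unfolding continuous_on_iff by (metis UNIV_I half_gt_zero)
  have hb: "h y \<ge> h x0 / 2" if "y \<in> ball x0 d" for y
  proof -
    have "dist (h y) (h x0) < h x0 / 2" using d(2)[of y] that by (simp add: dist_commute)
    then have "\<bar>h y - h x0\<bar> < h x0 / 2" by (simp add: dist_real_def)
    then show ?thesis using abs_ge_minus_self[of "h y - h x0"] by linarith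
  qed
  have "0 < measure lborel (ball x0 d)" using content_ball_pos[OF d(1), of x0] by simp
  then have eb: "0 < emeasure lborel (ball x0 d)"
    using emeasure_lborel_ball_finite[of x0 d]
    by (simp add: measure_def enn2real_positive_iff)
  have "(\<integral>\<^sup>+y. ennreal (h x0 / 2) * indicator (ball x0 d) y \<partial>lborel) \<le> (\<integral>\<^sup>+y. ennreal (h y) \<partial>lborel)"
  proof (intro nn_integral_mono)
    fix y show "ennreal (h x0 / 2) * indicator (ball x0 d) y \<le> ennreal (h y)"
    proof (cases "y \<in> ball x0 d")
      case True
      then have "h x0 / 2 \<le> h y" by (rule hb)
      then show ?thesis using True nn[of y] by (simp add: ennreal_le_iff)
    qed simp
  qed
  moreover have "(\<integral>\<^sup>+y. ennreal (h x0 / 2) * indicator (ball x0 d) y \<partial>lborel) = ennreal (h x0 / 2) * emeasure lborel (ball x0 d)"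
    by (rule nn_integral_cmult_indicator) simp
  moreover have "0 < ennreal (h x0 / 2) * emeasure lborel (ball x0 d)"
    using pos eb by (simp add: ennreal_zero_less_mult_iff)
  ultimately show ?thesis by order
qed

context bsys begin

definition BC :: "'th \<Rightarrow> 'x \<Rightarrow> 'u \<Rightarrow> ennreal" where
  "BC t a b = (\<integral>\<^sup>+x'. ennreal (sqrt (q t a b x' * q th_star a b x')) \<partial>lborel)"

definition HD :: "'th \<Rightarrow> 'x \<Rightarrow> 'u \<Rightarrow> ennreal" where
  "HD t a b = (\<integral>\<^sup>+x'. ennreal ((sqrt (q t a b x') - sqrt (q th_star a b x'))\<^sup>2) \<partial>lborel)"

definition bc :: "'th \<Rightarrow> 'x \<Rightarrow> 'u \<Rightarrow> real" where
  "bc t a b = enn2real (BC t a b)"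

lemma BC_HD: "2 * BC t a b + HD t a b = 2"
proof -
  have m1: "(\<lambda>x'. q t a b x') \<in> borel_measurable lborel" "(\<lambda>x'. q th_star a b x') \<in> borel_measurable lborel"
    using q_meas_x' by (auto simp: measurable_lborel1)
  have "2 = (\<integral>\<^sup>+x'. ennreal (q t a b x') \<partial>lborel) + (\<integral>\<^sup>+x'. ennreal (q th_star a b x') \<partial>lborel)"
    by (simp add: q_int1)
  also have "\<dots> = (\<integral>\<^sup>+x'. ennreal (q t a b x') + ennreal (q th_star a b x') \<partial>lborel)"
    using m1 by (subst nn_integral_add) auto
  also have "\<dots> = (\<integral>\<^sup>+x'. 2 * ennreal (sqrt (q t a b x' * q th_star a b x')) + ennreal ((sqrt (q t a b x') - sqrt (q th_star a b x'))\<^sup>2) \<partial>lborel)"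
  proof (intro nn_integral_cong)
    fix z
    define A where "A = q t a b z" define B where "B = q th_star a b z"
    have A: "A > 0" and B: "B > 0" unfolding A_def B_def by (auto intro: q_pos)
    have "A + B = 2 * sqrt (A * B) + (sqrt A - sqrt B)\<^sup>2"
      using A B by (simp add: power2_eq_square algebra_simps real_sqrt_mult)
    then have "ennreal A + ennreal B = ennreal (2 * sqrt (A * B)) + ennreal ((sqrt A - sqrt B)\<^sup>2)"
      using A B by (simp add: ennreal_plus[symmetric] del: ennreal_plus)
    also have "ennreal (2 * sqrt (A * B)) = ennreal 2 * ennreal (sqrt (A * B))"
      using A B by (intro ennreal_mult) auto
    also have "ennreal 2 = 2" by simp
    finally show "ennreal (q t a b z) + ennreal (q th_star a b z) = 2 * ennreal (sqrt (q t a b z * q th_star a b z)) + ennreal ((sqrt (q t a b z) - sqrt (q th_star a b z))\<^sup>2)"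
      unfolding A_def B_def .
  qed
  also have "\<dots> = 2 * BC t a b + HD t a b"
    unfolding BC_def HD_def using m1
    by (subst nn_integral_add) (auto intro!: nn_integral_cmult)
  finally show ?thesis by simp
qed

lemma BC_le1: "BC t a b \<le> 1"
proof -
  have "2 * BC t a b \<le> 2 * BC t a b + HD t a b" by simp
  then have le: "2 * BC t a b \<le> 2" using BC_HD[of t a b] by simp
  show ?thesis
  proof (cases "BC t a b")
    case (real r)
    have "ennreal (2 * r) = 2 * ennreal r" using real by (simp add: ennreal_mult)
    then have "ennreal (2 * r) \<le> ennreal 2" using le real by simp
    then have "2 * r \<le> 2" by (subst (asm) ennreal_le_iff) auto
    then show ?thesis using real by simp
  next
    case top
    then show ?thesis using le by (simp add: ennreal_mult_top top_unique)
  qed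
qed

lemma HD_le2: "HD t a b \<le> 2"
proof -
  have "HD t a b \<le> 2 * BC t a b + HD t a b" by simp
  then show ?thesis using BC_HD[of t a b] by simp
qed

lemma BC_pos: "BC t a b > 0"
  unfolding BC_def
proof (rule pos_integral_cont)
  show "continuous_on UNIV (\<lambda>x'. sqrt (q t a b x' * q th_star a b x'))"
    by (intro continuous_intros q_cont_x')
  show "0 \<le> sqrt (q t a b y * q th_star a b y)" for y using q_pos[of t a b y] q_pos[of th_star a b y] by simp
  show "0 < sqrt (q t a b 0 * q th_star a b 0)" using q_pos[of t a b 0] q_pos[of th_star a b 0] by simp
qed

lemma BC_eq: "BC t a b = ennreal (bc t a b)"
  unfolding bc_def using BC_le1[of t a b] by (cases "BC t a b") (auto simp: top_unique)

lemma bc_pos: "bc t a b > 0"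
  using BC_pos[of t a b] BC_eq[of t a b] by simp

lemma bc_le1: "bc t a b \<le> 1"
  using BC_le1[of t a b] BC_eq[of t a b] by simp

lemma bc_HD: "bc t a b = 1 - enn2real (HD t a b) / 2"
proof -
  obtain h where h: "HD t a b = ennreal h" "0 \<le> h"
    using HD_le2[of t a b] by (cases "HD t a b") (auto simp: top_unique)
  have bp: "0 \<le> bc t a b" using bc_pos[of t a b] by simp
  have "ennreal (2 * bc t a b + h) = ennreal (2 * bc t a b) + ennreal h"
    using bp h(2) by (intro ennreal_plus) auto
  also have "ennreal (2 * bc t a b) = 2 * ennreal (bc t a b)"
    using bp by (simp add: ennreal_mult)
  also have "2 * ennreal (bc t a b) + ennreal h = 2"
    using BC_HD[of t a b] BC_eq[of t a b] h by simp
  finally have "ennreal (2 * bc t a b + h) = ennreal 2" by simp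
  then have "2 * bc t a b + h = 2"
    using bp h(2) by (subst (asm) ennreal_inj) auto
  then show ?thesis using h by simp
qed

lemma HD_pos:
  assumes "q t a b x0 \<noteq> q th_star a b x0"
  shows "HD t a b > 0"
  unfolding HD_def
proof (rule pos_integral_cont)
  show "continuous_on UNIV (\<lambda>x'. (sqrt (q t a b x') - sqrt (q th_star a b x'))\<^sup>2)"
    by (intro continuous_intros q_cont_x')
  show "0 \<le> (sqrt (q t a b y) - sqrt (q th_star a b y))\<^sup>2" for y by simp
  have "sqrt (q t a b x0) \<noteq> sqrt (q th_star a b x0)" using assms q_pos by auto
  then show "0 < (sqrt (q t a b x0) - sqrt (q th_star a b x0))\<^sup>2" by simp
qed

lemma q_tendsto:
  assumes "(c \<longlongrightarrow> (a, b)) sequentially"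
  shows "((\<lambda>k. q t (fst (c k)) (snd (c k)) x') \<longlongrightarrow> q t a b x') sequentially"
proof -
  have "((\<lambda>k. (\<lambda>(x', xx, uu). q t xx uu x') (x', fst (c k), snd (c k))) \<longlongrightarrow> (\<lambda>(x', xx, uu). q t xx uu x') (x', a, b)) sequentially"
  proof (intro continuous_on_tendsto_compose[OF q_cont[of t]] tendsto_intros)
    show "(\<lambda>k. fst (c k)) \<longlonglongrightarrow> a" using tendsto_fst[OF assms] by simp
    show "(\<lambda>k. snd (c k)) \<longlonglongrightarrow> b" using tendsto_snd[OF assms] by simp
  qed auto
  then show ?thesis by (simp add: case_prod_beta)
qed

lemma bc_eventually:
  assumes c: "(c \<longlongrightarrow> (a, b)) sequentially" and ne: "q t a b x0 \<noteq> q th_star a b x0"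
  shows "\<exists>\<rho><1. eventually (\<lambda>k. bc t (fst (c k)) (snd (c k)) \<le> \<rho>) sequentially"
proof -
  define f where "f k x' = ennreal ((sqrt (q t (fst (c k)) (snd (c k)) x') - sqrt (q th_star (fst (c k)) (snd (c k)) x'))\<^sup>2)" for k x'
  have fm: "f k \<in> borel_measurable lborel" for k
    unfolding f_def using q_meas_x' by (simp add: measurable_lborel1)
  have flim: "(\<lambda>k. f k x') \<longlonglongrightarrow> ennreal ((sqrt (q t a b x') - sqrt (q th_star a b x'))\<^sup>2)" for x'
    unfolding f_def by (intro tendsto_ennrealI tendsto_intros q_tendsto[OF c])
  have "HD t a b = (\<integral>\<^sup>+x'. liminf (\<lambda>k. f k x') \<partial>lborel)"
    unfolding HD_def by (intro nn_integral_cong) (rule lim_imp_Liminf[symmetric, OF trivial_limit_sequentially flim])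
  also have "\<dots> \<le> liminf (\<lambda>k. \<integral>\<^sup>+x'. f k x' \<partial>lborel)"
    by (rule nn_integral_liminf[OF fm])
  also have "(\<lambda>k. \<integral>\<^sup>+x'. f k x' \<partial>lborel) = (\<lambda>k. HD t (fst (c k)) (snd (c k)))"
    unfolding HD_def f_def by simp
  finally have le: "HD t a b \<le> liminf (\<lambda>k. HD t (fst (c k)) (snd (c k)))" .
  define h where "h = enn2real (HD t a b)"
  have hpos: "h > 0" and hHD: "HD t a b = ennreal h"
    using HD_pos[OF ne] HD_le2[of t a b] unfolding h_def
    by (cases "HD t a b"; auto simp: top_unique)+
  have "ennreal (h / 2) < liminf (\<lambda>k. HD t (fst (c k)) (snd (c k)))"
  proof -
    have "ennreal (h / 2) < ennreal h" using hpos by (intro ennreal_lessI) auto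
    then show ?thesis using le hHD by simp
  qed
  then have ev: "eventually (\<lambda>k. ennreal (h / 2) < HD t (fst (c k)) (snd (c k))) sequentially"
    by (rule less_LiminfD)
  show ?thesis
  proof (intro exI conjI)
    show "1 - h / 4 < 1" using hpos by simp
    show "eventually (\<lambda>k. bc t (fst (c k)) (snd (c k)) \<le> 1 - h / 4) sequentially"
      using ev
    proof eventually_elim
      case (elim k)
      obtain r where r: "HD t (fst (c k)) (snd (c k)) = ennreal r" "0 \<le> r"
        using HD_le2[of t "fst (c k)" "snd (c k)"] by (cases "HD t (fst (c k)) (snd (c k))") (auto simp: top_unique)
      have "ennreal (h / 2) < ennreal r" using elim r by simp
      then have "h / 2 < r" using hpos by (subst (asm) ennreal_less_iff) auto
      then have "h / 2 \<le> enn2real (HD t (fst (c k)) (snd (c k)))" using r by simp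
      then show ?case unfolding bc_HD by simp
    qed
  qed
qed

end

lemma prod_sub_le:
  fixes b :: "nat \<Rightarrow> real"
  assumes "finite A" "S \<subseteq> A" "\<And>i. 0 \<le> b i" "\<And>i. b i \<le> 1"
  shows "prod b A \<le> prod b S"
proof -
  have "prod b A = prod b (A - S) * prod b S" by (rule prod.subset_diff[OF assms(2,1)])
  also have "\<dots> \<le> 1 * prod b S"
    using assms(3,4) by (intro mult_right_mono prod_le_1 prod_nonneg) auto
  finally show ?thesis by simp
qed

lemma prod_to_0:
  fixes b :: "nat \<Rightarrow> real"
  assumes nn: "\<And>i. 0 \<le> b i" and le1: "\<And>i. b i \<le> 1" and r: "strict_mono r" and rho: "\<rho> < 1"
    and ev: "eventually (\<lambda>j. b (r j) \<le> \<rho>) sequentially"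
  shows "(\<lambda>n. \<Prod>i<n. b i) \<longlonglongrightarrow> 0"
proof -
  obtain J0 where J0: "\<And>j. j \<ge> J0 \<Longrightarrow> b (r j) \<le> \<rho>" using ev unfolding eventually_sequentially by blast
  define \<rho>' where "\<rho>' = max \<rho> 0"
  have r0: "0 \<le> \<rho>'" "\<rho>' < 1" using rho unfolding \<rho>'_def by auto
  have bound: "(\<Prod>i<n. b i) \<le> \<rho>' ^ N" if n: "n \<ge> r (J0 + N)" for n N
  proof -
    have sub: "r ` {J0..<J0+N} \<subseteq> {..<n}"
    proof
      fix i assume "i \<in> r ` {J0..<J0+N}"
      then obtain j where j: "j < J0 + N" "i = r j" by auto
      then have "r j < r (J0 + N)" using r by (simp add: strict_mono_less)
      then show "i \<in> {..<n}" using j n by simp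
    qed
    have "(\<Prod>i<n. b i) \<le> prod b (r ` {J0..<J0+N})"
      by (rule prod_sub_le[OF _ sub nn le1]) simp
    also have "\<dots> = (\<Prod>j\<in>{J0..<J0+N}. b (r j))"
      by (subst prod.reindex) (auto intro: strict_mono_imp_inj_on[OF r])
    also have "\<dots> \<le> (\<Prod>j\<in>{J0..<J0+N}. \<rho>')"
      using J0 nn unfolding \<rho>'_def by (intro prod_mono) fastforce
    also have "\<dots> = \<rho>' ^ N" by simp
    finally show ?thesis .
  qed
  show ?thesis
  proof (rule LIMSEQ_I)
    fix e :: real assume e: "e > 0"
    from LIMSEQ_realpow_zero[OF r0] e obtain N where N: "\<bar>\<rho>' ^ N\<bar> < e"
      by (metis LIMSEQ_D diff_zero real_norm_def order_refl)
    show "\<exists>n0. \<forall>n\<ge>n0. norm ((\<Prod>i<n. b i) - 0) < e"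
    proof (intro exI allI impI)
      fix n assume "n \<ge> r (J0 + N)"
      then have "(\<Prod>i<n. b i) \<le> \<rho>' ^ N" by (rule bound)
      moreover have "0 \<le> (\<Prod>i<n. b i)" using nn by (intro prod_nonneg) auto
      ultimately show "norm ((\<Prod>i<n. b i) - 0) < e" using N by simp
    qed
  qed
qed

context bsys begin

definition lr :: "'th \<Rightarrow> 'x \<Rightarrow> 'u \<Rightarrow> 'x \<Rightarrow> real" where
  "lr t a b c = q t a b c / q th_star a b c"

definition hp :: "'th \<Rightarrow> 'x \<Rightarrow> 'u \<Rightarrow> 'x \<Rightarrow> real" where
  "hp t a b c = sqrt (lr t a b c) / bc t a b"

lemma lr_pos: "lr t a b c > 0"
  unfolding lr_def using q_pos by simp

lemma lr_star: "lr th_star a b c = 1"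
  unfolding lr_def using q_pos[of th_star a b c] by simp

lemma good_lr: "good (lr t)"
  unfolding good_def
proof (intro conjI allI)
  show "0 \<le> lr t a b c" for a b c using lr_pos[of t a b c] by simp
  show "(\<lambda>z. lr t (fst z) (fst (snd z)) (snd (snd z))) \<in> borel_measurable (borel \<Otimes>\<^sub>M borel \<Otimes>\<^sub>M borel)"
    unfolding lr_def using q_jmeas[of t] q_jmeas[of th_star] by (rule borel_measurable_divide)
  show "(\<integral>\<^sup>+x'. ennreal (q th_star a b x') * ennreal (lr t a b x') \<partial>lborel) = 1" for a b
  proof -
    have "(\<integral>\<^sup>+x'. ennreal (q th_star a b x') * ennreal (lr t a b x') \<partial>lborel) = (\<integral>\<^sup>+x'. ennreal (q t a b x') \<partial>lborel)"
    proof (intro nn_integral_cong)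
      fix z
      have "q th_star a b z * lr t a b z = q t a b z" unfolding lr_def using q_pos[of th_star a b z] by simp
      then show "ennreal (q th_star a b z) * ennreal (lr t a b z) = ennreal (q t a b z)"
        using q_pos[of th_star a b z] by (metis ennreal_mult less_imp_le lr_pos)
    qed
    then show ?thesis by (simp add: q_int1)
  qed
qed

lemma bc_meas: "(\<lambda>z. bc t (fst z) (fst (snd z))) \<in> borel_measurable (borel \<Otimes>\<^sub>M borel \<Otimes>\<^sub>M (borel :: 'x measure))"
proof -
  define G where "G p = ennreal (sqrt (q t (fst (fst p)) (snd (fst p)) (snd p) * q th_star (fst (fst p)) (snd (fst p)) (snd p)))"
    for p :: "('x \<times> 'u) \<times> 'x"
  have cq: "continuous_on UNIV (\<lambda>p::('x \<times> 'u) \<times> 'x. q s (fst (fst p)) (snd (fst p)) (snd p))" for s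
  proof -
    have "continuous_on UNIV (\<lambda>p::('x \<times> 'u) \<times> 'x. (\<lambda>(x', xx, uu). q s xx uu x') (snd p, fst (fst p), snd (fst p)))"
      by (rule continuous_on_compose2[OF q_cont[of s]]) (auto intro!: continuous_intros)
    then show ?thesis by (simp add: case_prod_beta)
  qed
  have "(\<lambda>p::('x \<times> 'u) \<times> 'x. sqrt (q t (fst (fst p)) (snd (fst p)) (snd p) * q th_star (fst (fst p)) (snd (fst p)) (snd p))) \<in> borel_measurable borel"
    by (intro borel_measurable_continuous_onI continuous_intros cq)
  then have "G \<in> borel_measurable (borel :: (('x \<times> 'u) \<times> 'x) measure)" unfolding G_def by measurable
  then have Gm: "G \<in> borel_measurable ((borel :: ('x \<times> 'u) measure) \<Otimes>\<^sub>M lborel)"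
  proof -
    have "sets ((borel :: ('x \<times> 'u) measure) \<Otimes>\<^sub>M (lborel :: 'x measure)) = sets (borel \<Otimes>\<^sub>M (borel :: 'x measure))"
      by (rule sets_pair_measure_cong) simp_all
    also have "\<dots> = sets (borel :: (('x \<times> 'u) \<times> 'x) measure)" by (simp only: borel_prod)
    finally have eqs: "sets ((borel :: ('x \<times> 'u) measure) \<Otimes>\<^sub>M (lborel :: 'x measure)) = sets (borel :: (('x \<times> 'u) \<times> 'x) measure)" .
    assume "G \<in> borel_measurable borel"
    then show ?thesis by (simp only: measurable_cong_sets[OF eqs refl])
  qed
  have "(\<lambda>p. \<integral>\<^sup>+x'. G (p, x') \<partial>lborel) \<in> borel_measurable (borel :: ('x \<times> 'u) measure)"
    by (rule lborel.borel_measurable_nn_integral_fst[OF Gm])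
  then have B1: "(\<lambda>p::'x \<times> 'u. bc t (fst p) (snd p)) \<in> borel_measurable borel"
    unfolding bc_def BC_def G_def by (intro borel_measurable_enn2real) simp
  have "(\<lambda>z::'x \<times> 'u \<times> 'x. (fst z, fst (snd z))) \<in> measurable (borel \<Otimes>\<^sub>M borel \<Otimes>\<^sub>M borel) (borel \<Otimes>\<^sub>M borel)"
    by measurable
  then have "(\<lambda>z::'x \<times> 'u \<times> 'x. (fst z, fst (snd z))) \<in> measurable (borel \<Otimes>\<^sub>M borel \<Otimes>\<^sub>M borel) borel"
    by (simp only: borel_prod)
  from measurable_compose[OF this B1] show ?thesis by simp
qed

lemma good_hp: "good (hp t)"
  unfolding good_def
proof (intro conjI allI)
  show "0 \<le> hp t a b c" for a b c unfolding hp_def using bc_pos[of t a b] lr_pos[of t a b c] by simp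
  show "(\<lambda>z. hp t (fst z) (fst (snd z)) (snd (snd z))) \<in> borel_measurable (borel \<Otimes>\<^sub>M borel \<Otimes>\<^sub>M borel)"
    unfolding hp_def using good_lr[of t] bc_meas[of t] unfolding good_def
    by (intro borel_measurable_divide borel_measurable_sqrt) auto
  show "(\<integral>\<^sup>+x'. ennreal (q th_star a b x') * ennreal (hp t a b x') \<partial>lborel) = 1" for a b
  proof -
    have bp: "bc t a b > 0" by (rule bc_pos)
    have "(\<integral>\<^sup>+x'. ennreal (q th_star a b x') * ennreal (hp t a b x') \<partial>lborel)
        = (\<integral>\<^sup>+x'. ennreal (sqrt (q t a b x' * q th_star a b x')) * ennreal (1 / bc t a b) \<partial>lborel)"
    proof (intro nn_integral_cong)
      fix z
      define A where "A = q t a b z" define B where "B = q th_star a b z"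
      have A: "A > 0" and B: "B > 0" unfolding A_def B_def by (auto intro: q_pos)
      have "B * (sqrt (A / B) / bc t a b) = sqrt (A * B) * (1 / bc t a b)"
      proof -
        have sB: "sqrt B > 0" using B by simp
        have "B * sqrt (A / B) = (sqrt B * sqrt B) * (sqrt A / sqrt B)"
          using B by (simp add: real_sqrt_divide)
        also have "\<dots> = sqrt A * sqrt B" using sB by (simp add: field_simps)
        also have "\<dots> = sqrt (A * B)" by (simp add: real_sqrt_mult)
        finally have "B * sqrt (A / B) = sqrt (A * B)" .
        then show ?thesis by simp
      qed
      then have "ennreal (B * (sqrt (A / B) / bc t a b)) = ennreal (sqrt (A * B)) * ennreal (1 / bc t a b)"
        using A B bp by (simp add: ennreal_mult[symmetric])
      moreover have "ennreal B * ennreal (sqrt (A / B) / bc t a b) = ennreal (B * (sqrt (A / B) / bc t a b))"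
        using A B bp by (intro ennreal_mult[symmetric]) auto
      ultimately show "ennreal (q th_star a b z) * ennreal (hp t a b z) = ennreal (sqrt (q t a b z * q th_star a b z)) * ennreal (1 / bc t a b)"
        unfolding hp_def lr_def A_def B_def by simp
    qed
    also have "\<dots> = BC t a b * ennreal (1 / bc t a b)"
      unfolding BC_def using q_meas_x' by (intro nn_integral_multc) (simp add: measurable_lborel1)
    also have "\<dots> = ennreal (bc t a b) * ennreal (1 / bc t a b)" by (simp add: BC_eq)
    also have "\<dots> = ennreal (bc t a b * (1 / bc t a b))"
      using bp by (intro ennreal_mult[symmetric]) auto
    also have "\<dots> = 1" using bp by simp
    finally show ?thesis .
  qed
qed

lemma Pr_lr_hp:
  "Pr (lr t) k \<omega> = (Pr (hp t) k \<omega> * (\<Prod>i<k. bc t (x i \<omega>) (u i \<omega>)))\<^sup>2"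
proof -
  have e: "lr t a b c = (hp t a b c * bc t a b)\<^sup>2" for a b c
    unfolding hp_def using bc_pos[of t a b] lr_pos[of t a b c] by (simp add: power_divide)
  have "Pr (lr t) k \<omega> = (\<Prod>i<k. (hp t (x i \<omega>) (u i \<omega>) (x (Suc i) \<omega>) * bc t (x i \<omega>) (u i \<omega>))\<^sup>2)"
    unfolding Pr_def by (subst e) (rule refl)
  also have "\<dots> = (\<Prod>i<k. hp t (x i \<omega>) (u i \<omega>) (x (Suc i) \<omega>) * bc t (x i \<omega>) (u i \<omega>))\<^sup>2"
    by (rule prod_power_distrib[symmetric])
  also have "(\<Prod>i<k. hp t (x i \<omega>) (u i \<omega>) (x (Suc i) \<omega>) * bc t (x i \<omega>) (u i \<omega>)) = Pr (hp t) k \<omega> * (\<Prod>i<k. bc t (x i \<omega>) (u i \<omega>))"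
    unfolding Pr_def by (rule prod.distrib)
  finally show ?thesis .
qed

lemma L_to_0:
  "AE \<omega> in M. \<forall>r' e x0. strict_mono r' \<and> (\<lambda>k. (x (r' k) \<omega>, u (r' k) \<omega>)) \<longlonglongrightarrow> e
     \<and> q t (fst e) (snd e) x0 \<noteq> q th_star (fst e) (snd e) x0 \<longrightarrow> (\<lambda>k. Pr (lr t) k \<omega>) \<longlonglongrightarrow> 0"
  using Pr_bdd[OF good_hp[of t]]
proof (rule AE_mp, intro AE_I2 impI allI)
  fix \<omega> r' e x0
  assume "\<exists>K. \<forall>k. Pr (hp t) k \<omega> \<le> K"
  then obtain K where K: "\<And>k. Pr (hp t) k \<omega> \<le> K" by blast
  assume H: "strict_mono r' \<and> (\<lambda>k. (x (r' k) \<omega>, u (r' k) \<omega>)) \<longlonglongrightarrow> e \<and> q t (fst e) (snd e) x0 \<noteq> q th_star (fst e) (snd e) x0"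
  have ce: "(\<lambda>k. (x (r' k) \<omega>, u (r' k) \<omega>)) \<longlonglongrightarrow> (fst e, snd e)" using H by simp
  from bc_eventually[OF ce] H obtain \<rho> where rho: "\<rho> < 1"
    and ev: "eventually (\<lambda>k. bc t (x (r' k) \<omega>) (u (r' k) \<omega>) \<le> \<rho>) sequentially"
    by auto
  define P where "P n = (\<Prod>i<n. bc t (x i \<omega>) (u i \<omega>))" for n
  have P0: "P \<longlonglongrightarrow> 0" unfolding P_def
    using bc_pos bc_le1 H rho ev by (intro prod_to_0[of _ r' \<rho>]) (auto intro: less_imp_le)
  have Pnn: "0 \<le> P n" for n unfolding P_def using bc_pos by (intro prod_nonneg) (auto intro: less_imp_le)
  have hnn: "0 \<le> Pr (hp t) n \<omega>" for n by (rule Pr_nn[OF good_hp])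
  have "(\<lambda>n. (K * P n)\<^sup>2) \<longlonglongrightarrow> (K * 0)\<^sup>2" by (intro tendsto_intros P0)
  then have up: "(\<lambda>n. (K * P n)\<^sup>2) \<longlonglongrightarrow> 0" by simp
  show "(\<lambda>k. Pr (lr t) k \<omega>) \<longlonglongrightarrow> 0"
  proof (rule tendsto_sandwich[OF _ _ tendsto_const up])
    show "eventually (\<lambda>n. 0 \<le> Pr (lr t) n \<omega>) sequentially" by (simp add: Pr_nn[OF good_lr])
    show "eventually (\<lambda>n. Pr (lr t) n \<omega> \<le> (K * P n)\<^sup>2) sequentially"
    proof (intro always_eventually allI)
      fix n
      have "Pr (hp t) n \<omega> * P n \<le> K * P n" using K[of n] Pnn[of n] by (rule mult_right_mono)
      then have "(Pr (hp t) n \<omega> * P n)\<^sup>2 \<le> (K * P n)\<^sup>2"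
        using hnn[of n] Pnn[of n] by (intro power_mono) auto
      then show "Pr (lr t) n \<omega> \<le> (K * P n)\<^sup>2" unfolding Pr_lr_hp P_def .
    qed
  qed
qed

end

locale bsys2 = bsys M x u w g f q phi th_star
  for M :: "'a measure" and x :: "nat \<Rightarrow> 'a \<Rightarrow> 'x::euclidean_space"
    and u :: "nat \<Rightarrow> 'a \<Rightarrow> 'u::polish_space" and w :: "nat \<Rightarrow> 'a \<Rightarrow> 'w::euclidean_space"
    and g f and q :: "'th \<Rightarrow> 'x \<Rightarrow> 'u \<Rightarrow> 'x \<Rightarrow> real" and phi th_star +
  fixes pi0 :: "'th \<Rightarrow> real" and e :: "nat \<Rightarrow> 'th"
  assumes e_bij: "bij e" and pi_nn: "\<And>t. 0 \<le> pi0 t" and pi_sum: "(pi0 has_sum 1) UNIV"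
begin

definition cw :: "nat \<Rightarrow> nat \<Rightarrow> real" where
  "cw n j = (if n \<le> j then pi0 (e j) else 0)"

definition T :: "nat \<Rightarrow> nat \<Rightarrow> 'a \<Rightarrow> ennreal" where
  "T n k \<omega> = (\<Sum>j. ennreal (cw n j * Pr (lr (e j)) k \<omega>))"

lemma cw_nn: "0 \<le> cw n j" unfolding cw_def using pi_nn by simp

lemma pe_has_sum: "((\<lambda>j. pi0 (e j)) has_sum 1) UNIV"
  using has_sum_reindex_bij_betw[of e UNIV UNIV pi0 1] e_bij pi_sum by (simp add: bij_def)

lemma pe_sums: "(\<lambda>j. pi0 (e j)) sums 1"
  by (rule has_sum_imp_sums[OF pe_has_sum])

lemma pe_summable: "summable (\<lambda>j. pi0 (e j))"
  using pe_sums by (rule sums_summable)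

lemma T_term_meas: "(\<lambda>\<omega>. ennreal (cw n j * Pr (lr (e j)) k \<omega>)) \<in> borel_measurable (F k)"
  using Pr_meas[OF good_lr] by measurable

lemma T_meas: "T n k \<in> borel_measurable (F k)"
  unfolding T_def by (rule borel_measurable_suminf_order) (rule T_term_meas)

lemma T_split: "ennreal (cw n j * Pr (lr (e j)) k \<omega>) = ennreal (cw n j) * ennreal (Pr (lr (e j)) k \<omega>)"
  using cw_nn by (rule ennreal_mult')

lemma T_mart:
  assumes A: "A \<in> sets (F k)"
  shows "(\<integral>\<^sup>+\<omega>. T n (Suc k) \<omega> * indicator A \<omega> \<partial>M) = (\<integral>\<^sup>+\<omega>. T n k \<omega> * indicator A \<omega> \<partial>M)"
proof -
  have AM [measurable]: "A \<in> sets M" using A sub_F[of k] by (auto simp: subalgebra_def)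
  note Pm [measurable] = Pr_meas_M[OF good_lr]
  have int_term: "(\<integral>\<^sup>+\<omega>. ennreal (cw n j * Pr (lr (e j)) kk \<omega>) * indicator A \<omega> \<partial>M)
        = ennreal (cw n j) * (\<integral>\<^sup>+\<omega>. ennreal (Pr (lr (e j)) kk \<omega>) * indicator A \<omega> \<partial>M)" for j kk
  proof -
    have "(\<integral>\<^sup>+\<omega>. ennreal (cw n j * Pr (lr (e j)) kk \<omega>) * indicator A \<omega> \<partial>M)
       = (\<integral>\<^sup>+\<omega>. ennreal (cw n j) * (ennreal (Pr (lr (e j)) kk \<omega>) * indicator A \<omega>) \<partial>M)"
      by (simp add: T_split mult.assoc)
    also have "\<dots> = ennreal (cw n j) * (\<integral>\<^sup>+\<omega>. ennreal (Pr (lr (e j)) kk \<omega>) * indicator A \<omega> \<partial>M)"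
      by (intro nn_integral_cmult) measurable
    finally show ?thesis .
  qed
  have sumint: "(\<integral>\<^sup>+\<omega>. T n kk \<omega> * indicator A \<omega> \<partial>M) = (\<Sum>j. \<integral>\<^sup>+\<omega>. ennreal (cw n j * Pr (lr (e j)) kk \<omega>) * indicator A \<omega> \<partial>M)" for kk
  proof -
    have "(\<integral>\<^sup>+\<omega>. T n kk \<omega> * indicator A \<omega> \<partial>M) = (\<integral>\<^sup>+\<omega>. (\<Sum>j. ennreal (cw n j * Pr (lr (e j)) kk \<omega>) * indicator A \<omega>) \<partial>M)"
      unfolding T_def by (simp add: ennreal_suminf_multc)
    also have "\<dots> = (\<Sum>j. \<integral>\<^sup>+\<omega>. ennreal (cw n j * Pr (lr (e j)) kk \<omega>) * indicator A \<omega> \<partial>M)"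
      by (intro nn_integral_suminf) measurable
    finally show ?thesis .
  qed
  show ?thesis
    unfolding sumint int_term using Pr_mart[OF good_lr A] by simp
qed

lemma T_int: "(\<integral>\<^sup>+\<omega>. T n k \<omega> \<partial>M) = (\<Sum>j. ennreal (cw n j))"
proof -
  have "(\<integral>\<^sup>+\<omega>. T n k \<omega> \<partial>M) = (\<Sum>j. \<integral>\<^sup>+\<omega>. ennreal (cw n j * Pr (lr (e j)) k \<omega>) \<partial>M)"
    unfolding T_def using Pr_meas_M[OF good_lr] by (intro nn_integral_suminf) measurable
  also have "\<dots> = (\<Sum>j. ennreal (cw n j) * (\<integral>\<^sup>+\<omega>. ennreal (Pr (lr (e j)) k \<omega>) \<partial>M))"
    unfolding T_split using Pr_meas_M[OF good_lr] by (subst nn_integral_cmult) (auto)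
  also have "\<dots> = (\<Sum>j. ennreal (cw n j))" by (simp add: Pr_int[OF good_lr])
  finally show ?thesis .
qed

lemma cw_summable: "summable (cw n)"
  unfolding cw_def using pe_summable
  by (rule summable_comparison_test'[where N=0]) (auto simp: pi_nn)

lemma tail_to_0: "(\<lambda>n. \<Sum>j. cw n j) \<longlonglongrightarrow> 0"
proof -
  have eq: "(\<Sum>j. cw n j) = 1 - (\<Sum>j<n. pi0 (e j))" for n
  proof -
    have "(\<lambda>j. pi0 (e j)) = (\<lambda>j. cw n j + (if j < n then pi0 (e j) else 0))"
      unfolding cw_def by (auto simp: fun_eq_iff)
    then have "1 = (\<Sum>j. cw n j + (if j < n then pi0 (e j) else 0))"
      using sums_unique[OF pe_sums] by metis
    also have "\<dots> = (\<Sum>j. cw n j) + (\<Sum>j. (if j < n then pi0 (e j) else 0))"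
      by (intro suminf_add[symmetric] cw_summable summable_finite[of "{..<n}"]) auto
    also have "(\<Sum>j. (if j < n then pi0 (e j) else 0)) = (\<Sum>j<n. pi0 (e j))"
      by (subst suminf_finite[of "{..<n}"]) auto
    finally show ?thesis by simp
  qed
  have "(\<lambda>n. \<Sum>j<n. pi0 (e j)) \<longlonglongrightarrow> 1"
    using pe_sums unfolding sums_def .
  then have "(\<lambda>n. 1 - (\<Sum>j<n. pi0 (e j))) \<longlonglongrightarrow> 1 - 1" by (intro tendsto_intros)
  then show ?thesis unfolding eq by simp
qed

lemma T_meas_M [measurable]: "T n k \<in> borel_measurable M"
  by (rule F_meas_M[OF T_meas])

lemma T_ville: "c * emeasure M {\<omega>\<in>space M. \<exists>k. c \<le> T n k \<omega>} \<le> ennreal (\<Sum>j. cw n j)"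
proof -
  have "c * emeasure M {\<omega>\<in>space M. \<exists>k. c \<le> T n k \<omega>} \<le> (\<integral>\<^sup>+\<omega>. T n 0 \<omega> \<partial>M)"
    by (rule ville_max[of M F "T n", OF sub_F F_mono_Suc T_meas T_mart])
  also have "\<dots> = ennreal (\<Sum>j. cw n j)" unfolding T_int using cw_nn cw_summable by (rule suminf_ennreal2)
  finally show ?thesis .
qed

lemma AE_tail: "AE \<omega> in M. \<forall>p::nat. \<exists>n. \<forall>k. T n k \<omega> < ennreal (1 / (real p + 1))"
proof (subst AE_all_countable, intro allI)
  fix p :: nat
  define c where "c = 1 / (real p + 1)"
  have cpos: "c > 0" unfolding c_def by simp
  define Bad where "Bad = {\<omega>\<in>space M. \<forall>n. \<exists>k. ennreal c \<le> T n k \<omega>}"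
  have Bad_sets: "Bad \<in> sets M" unfolding Bad_def by measurable
  have le: "c * prob Bad \<le> (\<Sum>j. cw n j)" for n
  proof -
    have "emeasure M Bad \<le> emeasure M {\<omega>\<in>space M. \<exists>k. ennreal c \<le> T n k \<omega>}"
      by (intro emeasure_mono) (auto simp: Bad_def)
    then have "ennreal c * emeasure M Bad \<le> ennreal c * emeasure M {\<omega>\<in>space M. \<exists>k. ennreal c \<le> T n k \<omega>}"
      by (intro mult_left_mono) auto
    also have "\<dots> \<le> ennreal (\<Sum>j. cw n j)" by (rule T_ville)
    finally have "ennreal (c * prob Bad) \<le> ennreal (\<Sum>j. cw n j)"
      using cpos by (simp add: emeasure_eq_measure ennreal_mult)
    then show ?thesis using cw_nn cw_summable by (subst (asm) ennreal_le_iff) (auto intro: suminf_nonneg)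
  qed
  have "c * prob Bad \<le> 0"
    using tail_to_0 by (rule LIMSEQ_le_const) (use le in auto)
  then have "prob Bad = 0" using cpos by (simp add: mult_le_0_iff measure_nonneg antisym)
  then have "Bad \<in> null_sets M" using Bad_sets by (intro null_setsI) (auto simp: emeasure_eq_measure)
  then show "AE \<omega> in M. \<exists>n. \<forall>k. T n k \<omega> < ennreal (1 / (real p + 1))"
  proof (rule AE_I')
    show "{\<omega> \<in> space M. \<not> (\<exists>n. \<forall>k. T n k \<omega> < ennreal (1 / (real p + 1)))} \<subseteq> Bad"
      unfolding Bad_def c_def by (auto simp: not_less)
  qed
qed

lemma AE_fin: "AE \<omega> in M. \<forall>k. T 0 k \<omega> \<noteq> \<infinity>"
proof (subst AE_all_countable, intro allI)
  fix k
  have "(\<integral>\<^sup>+\<omega>. T 0 k \<omega> \<partial>M) = ennreal (\<Sum>j. cw 0 j)"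
    unfolding T_int using cw_nn cw_summable by (rule suminf_ennreal2)
  then show "AE \<omega> in M. T 0 k \<omega> \<noteq> \<infinity>"
    by (intro nn_integral_PInf_AE T_meas_M) simp
qed

end

lemma det_final:
  fixes pr :: "'t \<Rightarrow> real" and e :: "nat \<Rightarrow> 't" and qq :: "'t \<Rightarrow> nat \<Rightarrow> real"
    and P :: "nat \<Rightarrow> 't \<Rightarrow> real" and L :: "'t \<Rightarrow> nat \<Rightarrow> real"
  assumes e: "bij e" and pi_nn: "\<And>t. 0 \<le> pr t" and pi_sum: "(pr has_sum 1) UNIV"
    and pi_pos: "pr ts > 0"
    and qq_pos: "\<And>t k. qq t k > 0"
    and L_def: "\<And>t k. L t k = (\<Prod>i<k. qq t i / qq ts i)"
    and fin: "\<And>k. (\<Sum>j. ennreal (pr (e j) * L (e j) k)) \<noteq> \<infinity>"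
    and conv: "\<And>t. t \<noteq> ts \<Longrightarrow> (\<lambda>k. L t k) \<longlonglongrightarrow> 0"
    and tail: "\<And>p::nat. \<exists>n. \<forall>k. (\<Sum>j. ennreal ((if n \<le> j then pr (e j) else 0) * L (e j) k)) < ennreal (1 / (real p + 1))"
    and P0: "\<And>t. P 0 t = pr t"
    and PS: "\<And>k t. P (Suc k) t = qq t k * P k t / (\<Sum>\<^sub>\<infinity>t'. qq t' k * P k t')"
  shows "(\<lambda>k. P k t) \<longlonglongrightarrow> (if t = ts then 1 else 0)"
proof -
  define a where "a t k = pr t * L t k" for t k
  have L_pos: "L t k > 0" for t k unfolding L_def using qq_pos by (intro prod_pos) (auto intro: divide_pos_pos)
  have L_ts: "L ts k = 1" for k unfolding L_def using qq_pos[of ts] by (simp add: less_imp_neq[symmetric])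
  have a_nn: "0 \<le> a t k" for t k unfolding a_def using pi_nn[of t] L_pos[of t k] by simp
  have summ: "summable (\<lambda>j. a (e j) k)" for k
    using a_nn fin[of k] unfolding a_def by (intro summable_suminf_not_top) auto
  define S where "S k = (\<Sum>j. a (e j) k)" for k
  have hs: "((\<lambda>t. a t k) has_sum S k) UNIV" for k
  proof -
    have "((\<lambda>j. a (e j) k) has_sum S k) UNIV"
      unfolding S_def using summ[of k] a_nn
      by (intro norm_summable_imp_has_sum summable_sums) (auto simp: abs_of_nonneg)
    then show ?thesis using has_sum_reindex_bij_betw[of e UNIV UNIV "\<lambda>t. a t k" "S k"] e
      by (simp add: bij_def)
  qed
  have infsum_S: "(\<Sum>\<^sub>\<infinity>t. a t k) = S k" for k using hs[of k] by (rule infsumI)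
  obtain j0 where j0: "e j0 = ts" using e by (metis bij_def surj_def)
  have ej: "e j = ts \<longleftrightarrow> j = j0" for j using e j0 by (metis bij_def injD)
  have S_ge: "pr ts \<le> S k" for k
  proof -
    have "(\<Sum>j\<in>{j0}. a (e j) k) \<le> S k"
      unfolding S_def using summ[of k] a_nn by (intro sum_le_suminf) auto
    then show ?thesis using j0 L_ts by (simp add: a_def)
  qed
  have S_pos: "S k > 0" for k using S_ge[of k] pi_pos by simp
  have S0: "S 0 = 1"
  proof -
    have "(\<lambda>t. a t 0) = pr" unfolding a_def L_def by (simp add: fun_eq_iff)
    then show ?thesis using infsum_S[of 0] infsumI[OF pi_sum] by simp
  qed
  have P_eq: "P k t = a t k / S k" for k t
  proof (induction k arbitrary: t)
    case 0
    then show ?case using S0 P0 unfolding a_def L_def by simp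
  next
    case (Suc k)
    define c where "c = qq ts k / S k"
    have c: "c > 0" unfolding c_def using qq_pos[of ts k] S_pos[of k] by simp
    have key: "qq t' k * (a t' k / S k) = c * a t' (Suc k)" for t'
    proof -
      have "L t' (Suc k) = L t' k * (qq t' k / qq ts k)" unfolding L_def by simp
      then show ?thesis unfolding a_def c_def using qq_pos[of ts k] S_pos[of k] by (simp add: field_simps)
    qed
    have "(\<Sum>\<^sub>\<infinity>t'. qq t' k * P k t') = (\<Sum>\<^sub>\<infinity>t'. c * a t' (Suc k))"
      unfolding Suc.IH key by simp
    also have "\<dots> = c * S (Suc k)" by (simp add: infsum_cmult_right' infsum_S)
    finally have den: "(\<Sum>\<^sub>\<infinity>t'. qq t' k * P k t') = c * S (Suc k)" .
    show ?case unfolding PS den using key[of t] c Suc.IH[of t] by simp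
  qed
  have S_lim: "S \<longlonglongrightarrow> pr ts"
  proof (rule LIMSEQ_I)
    fix \<epsilon> :: real assume eps: "\<epsilon> > 0"
    obtain p :: nat where p: "2 / \<epsilon> < real p" using reals_Archimedean2 by blast
    have p2: "1 / (real p + 1) < \<epsilon> / 2"
    proof -
      have "2 < \<epsilon> * (real p + 1)" using p eps by (simp add: field_simps)
      then show ?thesis using eps by (simp add: field_simps)
    qed
    obtain n where n: "\<And>k. (\<Sum>j. ennreal ((if n \<le> j then pr (e j) else 0) * L (e j) k)) < ennreal (1 / (real p + 1))"
      using tail[of p] by blast
    define tl where "tl k = (\<Sum>j. (if n \<le> j then pr (e j) else 0) * L (e j) k)" for k
    define hd where "hd k = (\<Sum>j<n. a (e j) k)" for k
    define H where "H = (\<Sum>j<n. if j = j0 then pr ts else 0)"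
    have tl_nn: "0 \<le> (if n \<le> j then pr (e j) else 0) * L (e j) k" for j k
      using pi_nn L_pos[of "e j" k] by simp
    have tl_summ: "summable (\<lambda>j. (if n \<le> j then pr (e j) else 0) * L (e j) k)" for k
      using summ[of k]
    proof (rule summable_comparison_test'[where N=0])
      fix j
      have "0 \<le> a (e j) k" by (rule a_nn)
      then show "norm ((if n \<le> j then pr (e j) else 0) * L (e j) k) \<le> a (e j) k"
        using tl_nn[of j k] unfolding a_def by auto
    qed
    have tl_bound: "tl k < 1 / (real p + 1)" for k
    proof -
      have "ennreal (tl k) < ennreal (1 / (real p + 1))"
        unfolding tl_def using n[of k] suminf_ennreal2[OF tl_nn tl_summ] by simp
      then show ?thesis by (subst (asm) ennreal_less_iff) (auto simp: tl_def intro: suminf_nonneg tl_summ tl_nn)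
    qed
    have tl_nn2: "0 \<le> tl k" for k unfolding tl_def using tl_summ tl_nn by (intro suminf_nonneg) auto
    have split: "S k = hd k + tl k" for k
    proof -
      have "(\<lambda>j. a (e j) k) = (\<lambda>j. (if j < n then a (e j) k else 0) + (if n \<le> j then pr (e j) else 0) * L (e j) k)"
        unfolding a_def by (auto simp: fun_eq_iff)
      then have "S k = (\<Sum>j. (if j < n then a (e j) k else 0) + (if n \<le> j then pr (e j) else 0) * L (e j) k)"
        unfolding S_def by simp
      also have "\<dots> = (\<Sum>j. (if j < n then a (e j) k else 0)) + tl k"
        unfolding tl_def by (intro suminf_add[symmetric] tl_summ summable_finite[of "{..<n}"]) auto
      also have "(\<Sum>j. (if j < n then a (e j) k else 0)) = hd k"
        unfolding hd_def by (subst suminf_finite[of "{..<n}"]) auto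
      finally show ?thesis .
    qed
    have hd_lim: "hd \<longlonglongrightarrow> H"
      unfolding hd_def H_def
    proof (intro tendsto_sum)
      fix j assume "j \<in> {..<n}"
      show "(\<lambda>k. a (e j) k) \<longlonglongrightarrow> (if j = j0 then pr ts else 0)"
      proof (cases "j = j0")
        case True then show ?thesis using j0 L_ts by (simp add: a_def)
      next
        case False
        then have "e j \<noteq> ts" using ej by simp
        from tendsto_mult[OF tendsto_const conv[OF this], of "pr (e j)"]
        show ?thesis using False by (simp add: a_def)
      qed
    qed
    have H_le: "H \<le> pr ts" unfolding H_def using pi_nn[of ts] by (simp add: sum.delta)
    obtain K where K: "\<And>k. k \<ge> K \<Longrightarrow> norm (hd k - H) < \<epsilon> / 2"
      using LIMSEQ_D[OF hd_lim, of "\<epsilon> / 2"] eps by auto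
    show "\<exists>no. \<forall>k\<ge>no. norm (S k - pr ts) < \<epsilon>"
    proof (intro exI allI impI)
      fix k assume "k \<ge> K"
      then have "\<bar>hd k - H\<bar> < \<epsilon> / 2" using K[of k] by simp
      then have "hd k - H < \<epsilon> / 2" by linarith
      then have "S k - pr ts < \<epsilon>" using split[of k] tl_bound[of k] H_le p2 by simp
      then show "norm (S k - pr ts) < \<epsilon>" using S_ge[of k] by simp
    qed
  qed
  show ?thesis
  proof (cases "t = ts")
    case True
    have "(\<lambda>k. pr ts / S k) \<longlonglongrightarrow> pr ts / pr ts" using pi_pos by (intro tendsto_intros S_lim) simp
    then show ?thesis using True pi_pos unfolding P_eq a_def by (simp add: L_ts)
  next
    case False
    have "(\<lambda>k. pr t * L t k / S k) \<longlonglongrightarrow> pr t * 0 / pr ts"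
      using pi_pos by (intro tendsto_intros S_lim conv[OF False]) simp
    then show ?thesis using False unfolding P_eq a_def by simp
  qed
qed

theorem mainTheorem4:
  fixes M :: "'a measure"
    and x :: "nat \<Rightarrow> 'a \<Rightarrow> 'x::euclidean_space"
    and u :: "nat \<Rightarrow> 'a \<Rightarrow> 'u::polish_space"
    and w :: "nat \<Rightarrow> 'a \<Rightarrow> 'w::euclidean_space"
    and g :: "'w \<Rightarrow> ennreal"
    and f :: "'x \<Rightarrow> 'u \<Rightarrow> 'w \<Rightarrow> 'th::countable \<Rightarrow> 'x"
    and q :: "'th \<Rightarrow> 'x \<Rightarrow> 'u \<Rightarrow> 'x \<Rightarrow> real"
    and phi :: "nat \<Rightarrow> (nat \<Rightarrow> 'x) \<times> (nat \<Rightarrow> 'u) \<Rightarrow> 'u"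
    and pi0 :: "'th \<Rightarrow> real"
    and th_star :: 'th
  assumes prob: "prob_space M"
    and Theta_infinite: "infinite (UNIV :: 'th set)"
    \<comment> \<open>f Borel measurable\<close>
    and f_meas: "\<And>th. (\<lambda>(xx, uu, ww). f xx uu ww th)
                   \<in> borel_measurable (borel \<Otimes>\<^sub>M borel \<Otimes>\<^sub>M borel)"
    \<comment> \<open>disturbances i.i.d. with density g, independent of the initial state\<close>
    and x0_meas: "x 0 \<in> borel_measurable M"
    and w_dist: "\<And>k. distributed M lborel (w k) g"
    and w_indep: "prob_space.indep_vars M (\<lambda>_. borel) w UNIV"
    and x0_w_indep: "prob_space.indep_set M
                         (sets (vimage_algebra (space M) (x 0) borel))
                         (sets (vimage_algebra (space M) (\<lambda>\<omega>. \<lambda>k. w k \<omega>) (PiM UNIV (\<lambda>_. borel))))"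
    \<comment> \<open>closed-loop dynamics under the true parameter\<close>
    and dyn: "\<And>k \<omega>. x (Suc k) \<omega> = f (x k \<omega>) (u k \<omega>) (w k \<omega>) th_star"
    \<comment> \<open>u_k is a measurable function of (x_0..x_k, u_0..u_(k-1))\<close>
    and phi_meas: "\<And>k. phi k \<in> borel_measurable
                     (PiM {..k} (\<lambda>_. borel) \<Otimes>\<^sub>M PiM {..<k} (\<lambda>_. borel))"
    and policy: "\<And>k \<omega>. u k \<omega> = phi k (restrict (\<lambda>i. x i \<omega>) {..k}, restrict (\<lambda>i. u i \<omega>) {..<k})"
    \<comment> \<open>q(.; th, x, u) is the density of x_{k+1} given x_k = x, u_k = u under th\<close>
    and q_density: "\<And>th xx uu. distr (density lborel g) lborel (\<lambda>ww. f xx uu ww th)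
                                 = density lborel (\<lambda>x'. ennreal (q th xx uu x'))"
    and q_pos: "\<And>th xx uu x'. q th xx uu x' > 0"
    and q_cont: "\<And>th. continuous_on UNIV (\<lambda>(x', xx, uu). q th xx uu x')"
    and q_C1: "\<And>th xx uu. \<exists>D :: 'x \<Rightarrow> 'x \<Rightarrow>\<^sub>L real.
                 (\<forall>x'. (q th xx uu has_derivative blinfun_apply (D x')) (at x'))
                 \<and> continuous_on UNIV D \<and> bounded (range D)"
    \<comment> \<open>prior\<close>
    and prior_nonneg: "\<And>th. pi0 th \<ge> 0"
    and prior_sum: "(pi0 has_sum 1) UNIV"
    \<comment> \<open>(i)\<close>
    and prior_pos: "pi0 th_star > 0"
    \<comment> \<open>(ii) combinational identifiability along the closed-loop trajectory\<close>
    and ident: "AE \<omega> in M. \<exists>(Ms :: nat set) (r :: nat \<Rightarrow> nat \<Rightarrow> nat) (eta :: nat \<Rightarrow> 'x \<times> 'u).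
                   (\<forall>m\<in>Ms. strict_mono (r m) \<and>
                       (\<lambda>k. (x (r m k) \<omega>, u (r m k) \<omega>)) \<longlonglongrightarrow> eta m)
                   \<and> blind_region q (eta ` Ms) = {}"
  shows "AE \<omega> in M. \<forall>th. (\<lambda>k. posterior pi0 q (\<lambda>i. x i \<omega>) (\<lambda>i. u i \<omega>) k th)
                              \<longlonglongrightarrow> (if th = th_star then 1 else 0)"
proof -
  have bs: "bsys M x u w g f q phi th_star"
    by (intro bsys.intro[OF prob] bsys_axioms.intro) (rule assms; assumption)+
  interpret B: bsys M x u w g f q phi th_star by (rule bs)
  define e where "e = from_nat_into (UNIV :: 'th set)"
  have "bij_betw e UNIV UNIV"
    unfolding e_def by (rule bij_betw_from_nat_into) (simp_all add: Theta_infinite)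
  then have ebij: "bij e" by (simp add: bij_def bij_betw_def)
  interpret B2: bsys2 M x u w g f q phi th_star pi0 e
    by (intro bsys2.intro[OF bs] bsys2_axioms.intro ebij prior_nonneg prior_sum)
  have A2: "AE \<omega> in M. \<forall>t. \<forall>r' e' x0. strict_mono r' \<and> (\<lambda>k. (x (r' k) \<omega>, u (r' k) \<omega>)) \<longlonglongrightarrow> e'
     \<and> q t (fst e') (snd e') x0 \<noteq> q th_star (fst e') (snd e') x0 \<longrightarrow> (\<lambda>k. B.Pr (B.lr t) k \<omega>) \<longlonglongrightarrow> 0"
    by (subst AE_all_countable) (intro allI B.L_to_0)
  show ?thesis using ident A2 B2.AE_tail B2.AE_fin
  proof eventually_elim
    case (elim \<omega>)
    from elim(1) show ?case
    proof (elim exE conjE)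
    fix Ms r eta
    assume H1: "\<forall>m\<in>Ms. strict_mono (r m) \<and> (\<lambda>k. (x (r m k) \<omega>, u (r m k) \<omega>)) \<longlonglongrightarrow> eta m"
      and BR: "blind_region q (eta ` Ms) = {}"
    have conv_m: "strict_mono (r m) \<and> (\<lambda>k. (x (r m k) \<omega>, u (r m k) \<omega>)) \<longlonglongrightarrow> eta m" if "m \<in> Ms" for m
      using H1 that by (rule bspec)
    show ?case
    proof
      fix t
      define PP where "PP = posterior pi0 q (\<lambda>i. x i \<omega>) (\<lambda>i. u i \<omega>)"
      define QQ where "QQ t k = q t (x k \<omega>) (u k \<omega>) (x (Suc k) \<omega>)" for t k
      define LL where "LL t k = B.Pr (B.lr t) k \<omega>" for t k
      have "(\<lambda>k. PP k t) \<longlonglongrightarrow> (if t = th_star then 1 else 0)"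
      proof (rule det_final[where qq = QQ and L = LL and e = e and pr = pi0 and ts = th_star and P = PP])
        show "bij e" by (rule ebij)
        show "0 \<le> pi0 t" for t by (rule prior_nonneg)
        show "(pi0 has_sum 1) UNIV" by (rule prior_sum)
        show "pi0 th_star > 0" by (rule prior_pos)
        show "QQ t k > 0" for t k unfolding QQ_def by (rule q_pos)
        show "LL t k = (\<Prod>i<k. QQ t i / QQ th_star i)" for t k
          unfolding LL_def QQ_def B.Pr_def B.lr_def by simp
        show "(\<Sum>j. ennreal (pi0 (e j) * LL (e j) k)) \<noteq> \<infinity>" for k
          using elim(4) unfolding B2.T_def B2.cw_def LL_def by simp
        show "\<exists>n. \<forall>k. (\<Sum>j. ennreal ((if n \<le> j then pi0 (e j) else 0) * LL (e j) k)) < ennreal (1 / (real p + 1))" for p :: nat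
          using elim(3) unfolding B2.T_def B2.cw_def LL_def by blast
        show "PP 0 t = pi0 t" for t unfolding PP_def by simp
        show "PP (Suc k) t = QQ t k * PP k t / (\<Sum>\<^sub>\<infinity>t'. QQ t' k * PP k t')" for k t
          unfolding PP_def QQ_def by simp
        show "(\<lambda>k. LL t' k) \<longlonglongrightarrow> 0" if ne: "t' \<noteq> th_star" for t'
        proof -
          obtain et x0 where et: "et \<in> eta ` Ms" and x0: "q t' (fst et) (snd et) x0 \<noteq> q th_star (fst et) (snd et) x0"
            using blind_sep[of q, OF q_pos B.q_int1 B.q_meas_x' BR ne] by blast
          then obtain m where m: "m \<in> Ms" "et = eta m" by blast
          show ?thesis unfolding LL_def using elim(2) conv_m[OF m(1)] x0 m(2) by blast
        qed
      qed
      then show "(\<lambda>k. posterior pi0 q (\<lambda>i. x i \<omega>) (\<lambda>i. u i \<omega>) k t) \<longlonglongrightarrow> (if t = th_star then 1 else 0)"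
        unfolding PP_def .
    qed
  qed
  qed
qed

end
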